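(* Under the setting of the context (with $\lambda>0$, $\delta>0$), let $(x_t)_{t\ge0}$ be generated by RGD with step sizes chosen either by line minimization or by Armijo backtracking. Then: (i) every accumulation point $x_*$ of $(x_t)$ is a stationary point, i.e. $\operatorname{grad} f(x_* )=0$; (ii) there is a constant $\bar C>0$ such that for every $\epsilon>0$, there is an index $t\le \lceil (f(x_0)-f_{\inf})/(\bar C\epsilon^2)\rceil$ with $\|\operatorname{grad} f(x_t)\|_{x_t}\le\epsilon$, where $f_{\inf}=\inf_{\mathcal{M}}f$.
   Context: Fix integers $k\ge 2$, $R\ge 1$, $m_1,\dots,m_k\ge1$. Let $\mathcal{M}=\mathbb{R}^{m_1\times R}\times\cdots\times\mathbb{R}^{m_k\times R}$, with points $U=(U^{(1)},\dots,U^{(k)})$; its tangent space at every point is $\mathcal{M}$ itself. For $U\in\mathcal{M}$, let $[\![U^{(1)},\dots,U^{(k)}]\!]:=\sum_{r=1}^R U^{(1)}_{:,r}\circ\cdots\circ U^{(k)}_{:,r}\in\mathbb{R}^{m_1\times\cdots\times m_k}$ (sum of outer products of corresponding columns). Let $\mathcal{T}^\star\in\mathbb{R}^{m_1\times\cdots\times m_k}$, let $\Omega\subseteq [m_1]\times\cdots\times[m_k]$ be nonempty, $p=|\Omega|/(m_1\cdots m_k)$, and $P_\Omega$ the operator keeping entries indexed by $\Omega$ and zeroing the others. Let $\lambda>0$ and $$f(U)=\frac{1}{2p}\|P_\Omega([\![U^{(1)},\dots,U^{(k)}]\!]-\mathcal{T}^\star)\|_F^2+\frac{\lambda}{2}\sum_{i=1}^k\|U^{(i)}\|_F^2.$$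 For $i=1,\dots,k$, let $K_i(U)=U^{(k)}\odot\cdots\odot U^{(i+1)}\odot U^{(i-1)}\odot\cdots\odot U^{(1)}$ (Khatri–Rao product, i.e. columnwise Kronecker product), and for fixed $\delta>0$ let $H_i(U)=K_i(U)^TK_i(U)+\delta I_R$. The Riemannian metric on $\mathcal{M}$ is $g_U(\xi,\eta)=\sum_{i=1}^k\operatorname{tr}(\xi^{(i)}H_i(U)(\eta^{(i)})^T)$, with norm $\|\xi\|_U=\sqrt{g_U(\xi,\xi)}$. The Riemannian gradient is $\operatorname{grad} f(U)=(\partial_{U^{(1)}}f(U)H_1(U)^{-1},\dots,\partial_{U^{(k)}}f(U)H_k(U)^{-1})$, where $\partial_{U^{(i)}}f$ is the ordinary partial (Euclidean) gradient. RGD: given $x_0\in\mathcal{M}$, set $\eta_t=-\operatorname{grad} f(x_t)$ and $x_{t+1}=x_t+s_t\eta_t$. Step-size rules: (line minimization) $s_t\in\arg\min_{s>0} f(x_t+s\eta_t)$; (Armijo backtracking) with fixed $\sigma,\beta\in(0,1)$ and $s_{\min}>0$, a trial step $s_t^0>0$ is set ($s_t^0=1$ for $t\le1$, and $s_t^0=2(f(x_{t-1})-f(x_{t-2}))/g_{x_{t-1}}(\eta_{t-1},\operatorname{grad} f(x_{t-1}))$ for $t\ge2$), and $s_t=\max(s_t^0\beta^\ell,s_{\min})$ where $\ell\ge0$ is the smallest integer (assumed to exist) such that $f(x_t)-f(x_t+s_t\eta_t)\ge\sigma s_t\, g_{x_t}(-\operatorname{grad} f(x_t),\eta_t)$. 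*)

theory Defs
  imports "HOL-Analysis.Analysis"
begin

text \<open>Modes are indexed 0..k-1 (paper: 1..k), rows of the factor
matrix U^(i) by 0..m i - 1, columns by 0..R-1.  A point of the manifold
M = R^(m_1 x R) x ... x R^(m_k x R) is a function U :: nat => nat => nat => real,
with U i a r the (a,r) entry of U^(i); entries outside the index ranges are 0.
A tensor in R^(m_1 x ... x m_k) is a function on multi-indices j :: nat => nat.\<close>

type_synonym pt = "nat \<Rightarrow> nat \<Rightarrow> nat \<Rightarrow> real"

definition mpts :: "nat \<Rightarrow> (nat \<Rightarrow> nat) \<Rightarrow> nat \<Rightarrow> pt set" where
  "mpts k m R = {U. \<forall>i a r. (k \<le> i \<or> m i \<le> a \<or> R \<le> r) \<longrightarrow> U i a r = 0}"

definition mindex :: "nat \<Rightarrow> (nat \<Rightarrow> nat) \<Rightarrow> (nat \<Rightarrow> nat) set" where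
  "mindex k m = PiE {..<k} (\<lambda>i. {..<m i})"

definition cpt :: "nat \<Rightarrow> nat \<Rightarrow> pt \<Rightarrow> (nat \<Rightarrow> nat) \<Rightarrow> real" where
  "cpt k R U j = (\<Sum>r<R. \<Prod>i<k. U i (j i) r)"

definition pmove :: "pt \<Rightarrow> pt \<Rightarrow> real \<Rightarrow> pt" where
  "pmove U \<eta> s = (\<lambda>i a r. U i a r + s * \<eta> i a r)"

definition pneg :: "pt \<Rightarrow> pt" where
  "pneg \<eta> = (\<lambda>i a r. - \<eta> i a r)"

definition obj :: "nat \<Rightarrow> (nat \<Rightarrow> nat) \<Rightarrow> nat \<Rightarrow> ((nat \<Rightarrow> nat) \<Rightarrow> real)
    \<Rightarrow> (nat \<Rightarrow> nat) set \<Rightarrow> real \<Rightarrow> pt \<Rightarrow> real" where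
  "obj k m R T \<Omega> lam U =
     (let p = real (card \<Omega>) / real (card (mindex k m)) in
      1 / (2 * p) * (\<Sum>j\<in>\<Omega>. (cpt k R U j - T j)\<^sup>2)
      + lam / 2 * (\<Sum>i<k. \<Sum>a<m i. \<Sum>r<R. (U i a r)\<^sup>2))"

definition egrad :: "(pt \<Rightarrow> real) \<Rightarrow> pt \<Rightarrow> pt" where
  "egrad F U = (\<lambda>i a r. deriv (\<lambda>s. F (\<lambda>i' a' r'. U i' a' r' +
       (if i' = i \<and> a' = a \<and> r' = r then s else 0))) 0)"

text \<open>Khatri-Rao product K_i(U) = U^(k) (.) ... (.) U^(i+1) (.) U^(i-1) (.) ... (.) U^(1):
rows indexed by multi-indices over the modes l \<noteq> i, columns by r.\<close>
definition krao :: "nat \<Rightarrow> pt \<Rightarrow> nat \<Rightarrow> (nat \<Rightarrow> nat) \<Rightarrow> nat \<Rightarrow> real" where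
  "krao k U i j r = (\<Prod>l\<in>{..<k} - {i}. U l (j l) r)"

definition Hmat :: "nat \<Rightarrow> (nat \<Rightarrow> nat) \<Rightarrow> real \<Rightarrow> pt \<Rightarrow> nat \<Rightarrow> nat \<Rightarrow> nat \<Rightarrow> real" where
  "Hmat k m del U i r r' =
     (\<Sum>j\<in>PiE ({..<k} - {i}) (\<lambda>l. {..<m l}). krao k U i j r * krao k U i j r')
     + (if r = r' then del else 0)"

definition rmetric :: "nat \<Rightarrow> (nat \<Rightarrow> nat) \<Rightarrow> nat \<Rightarrow> real \<Rightarrow> pt \<Rightarrow> pt \<Rightarrow> pt \<Rightarrow> real" where
  "rmetric k m R del U \<xi> \<eta> =
     (\<Sum>i<k. \<Sum>a<m i. \<Sum>r<R. \<Sum>r'<R. \<xi> i a r * Hmat k m del U i r r' * \<eta> i a r')"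

definition rnorm :: "nat \<Rightarrow> (nat \<Rightarrow> nat) \<Rightarrow> nat \<Rightarrow> real \<Rightarrow> pt \<Rightarrow> pt \<Rightarrow> real" where
  "rnorm k m R del U \<xi> = sqrt (rmetric k m R del U \<xi> \<xi>)"

definition rgrad :: "nat \<Rightarrow> (nat \<Rightarrow> nat) \<Rightarrow> nat \<Rightarrow> real \<Rightarrow> (pt \<Rightarrow> real) \<Rightarrow> pt \<Rightarrow> pt" where
  "rgrad k m R del F U = (THE \<xi>. \<xi> \<in> mpts k m R \<and>
     (\<forall>i<k. \<forall>a<m i. \<forall>r<R. (\<Sum>r'<R. \<xi> i a r' * Hmat k m del U i r' r) = egrad F U i a r))"

definition fnorm :: "nat \<Rightarrow> (nat \<Rightarrow> nat) \<Rightarrow> nat \<Rightarrow> pt \<Rightarrow> real" where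
  "fnorm k m R U = sqrt (\<Sum>i<k. \<Sum>a<m i. \<Sum>r<R. (U i a r)\<^sup>2)"

definition accum_pt :: "nat \<Rightarrow> (nat \<Rightarrow> nat) \<Rightarrow> nat \<Rightarrow> (nat \<Rightarrow> pt) \<Rightarrow> pt \<Rightarrow> bool" where
  "accum_pt k m R x y \<longleftrightarrow> y \<in> mpts k m R \<and>
     (\<exists>\<phi>::nat \<Rightarrow> nat. strict_mono \<phi> \<and>
        (\<lambda>n. fnorm k m R (\<lambda>i a r. x (\<phi> n) i a r - y i a r)) \<longlonglongrightarrow> 0)"

definition rgd_iter :: "nat \<Rightarrow> (nat \<Rightarrow> nat) \<Rightarrow> nat \<Rightarrow> real \<Rightarrow> (pt \<Rightarrow> real)
    \<Rightarrow> (nat \<Rightarrow> pt) \<Rightarrow> (nat \<Rightarrow> real) \<Rightarrow> bool" where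
  "rgd_iter k m R del F x s \<longleftrightarrow> x 0 \<in> mpts k m R \<and>
     (\<forall>t. x (Suc t) = pmove (x t) (pneg (rgrad k m R del F (x t))) (s t))"

definition linemin_rule :: "nat \<Rightarrow> (nat \<Rightarrow> nat) \<Rightarrow> nat \<Rightarrow> real \<Rightarrow> (pt \<Rightarrow> real)
    \<Rightarrow> (nat \<Rightarrow> pt) \<Rightarrow> (nat \<Rightarrow> real) \<Rightarrow> bool" where
  "linemin_rule k m R del F x s \<longleftrightarrow>
     (\<forall>t. s t > 0 \<and> (\<forall>s'>0.
        F (pmove (x t) (pneg (rgrad k m R del F (x t))) (s t))
          \<le> F (pmove (x t) (pneg (rgrad k m R del F (x t))) s')))"

definition armijo_trial :: "nat \<Rightarrow> (nat \<Rightarrow> nat) \<Rightarrow> nat \<Rightarrow> real \<Rightarrow> (pt \<Rightarrow> real)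
    \<Rightarrow> (nat \<Rightarrow> pt) \<Rightarrow> nat \<Rightarrow> real" where
  "armijo_trial k m R del F x t =
     (if t \<le> 1 then 1
      else 2 * (F (x (t - 1)) - F (x (t - 2))) /
           rmetric k m R del (x (t - 1)) (pneg (rgrad k m R del F (x (t - 1))))
                   (rgrad k m R del F (x (t - 1))))"

definition armijo_cond :: "nat \<Rightarrow> (nat \<Rightarrow> nat) \<Rightarrow> nat \<Rightarrow> real \<Rightarrow> (pt \<Rightarrow> real)
    \<Rightarrow> real \<Rightarrow> pt \<Rightarrow> real \<Rightarrow> bool" where
  "armijo_cond k m R del F \<sigma> U st \<longleftrightarrow>
     F U - F (pmove U (pneg (rgrad k m R del F U)) st)
       \<ge> \<sigma> * st * rmetric k m R del U (pneg (rgrad k m R del F U)) (pneg (rgrad k m R del F U))"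

definition armijo_rule :: "nat \<Rightarrow> (nat \<Rightarrow> nat) \<Rightarrow> nat \<Rightarrow> real \<Rightarrow> (pt \<Rightarrow> real)
    \<Rightarrow> real \<Rightarrow> real \<Rightarrow> real \<Rightarrow> (nat \<Rightarrow> pt) \<Rightarrow> (nat \<Rightarrow> real) \<Rightarrow> bool" where
  "armijo_rule k m R del F \<sigma> \<beta> smin x s \<longleftrightarrow>
     (\<forall>t. (\<exists>l::nat. armijo_cond k m R del F \<sigma> (x t)
                     (max (armijo_trial k m R del F x t * \<beta> ^ l) smin)) \<and>
          s t = max (armijo_trial k m R del F x t *
                      \<beta> ^ (LEAST l::nat. armijo_cond k m R del F \<sigma> (x t)
                              (max (armijo_trial k m R del F x t * \<beta> ^ l) smin))) smin)"

end

theory Submission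
  imports Defs "Jordan_Normal_Form.Determinant" "Jordan_Normal_Form.Gauss_Jordan_Elimination"
begin

lemma solve_inj:
  fixes H :: "nat \<Rightarrow> nat \<Rightarrow> real" and n :: nat and e :: "nat \<Rightarrow> real"
  assumes inj: "\<And>v. (\<forall>r<n. (\<Sum>r'<n. v r' * H r' r) = 0) \<Longrightarrow> (\<forall>r<n. v r = 0)"
  shows "\<exists>v. \<forall>r<n. (\<Sum>r'<n. v r' * H r' r) = e r"
proof -
  define A where "A = mat n n (\<lambda>(r,r'). H r' r)"
  have A: "A \<in> carrier_mat n n" unfolding A_def by simp
  have mv: "(A *\<^sub>v w) $ r = (\<Sum>r'<n. w $ r' * H r' r)" if "r < n" "w \<in> carrier_vec n" for w r
    using that unfolding A_def
    by (auto simp: mult_mat_vec_def scalar_prod_def atLeast0LessThan intro!: sum.cong)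
  have "det A \<noteq> 0"
  proof
    assume "det A = 0"
    then obtain v where v: "v \<in> carrier_vec n" "v \<noteq> 0\<^sub>v n" "A *\<^sub>v v = 0\<^sub>v n"
      using det_0_iff_vec_prod_zero[OF A] by blast
    have "\<forall>r<n. (\<Sum>r'<n. (\<lambda>i. v $ i) r' * H r' r) = 0"
    proof (intro allI impI)
      fix r assume r: "r < n"
      have "(A *\<^sub>v v) $ r = 0" using v(3) r by simp
      thus "(\<Sum>r'<n. (\<lambda>i. v $ i) r' * H r' r) = 0" using mv[OF r v(1)] by simp
    qed
    from inj[OF this] have "v = 0\<^sub>v n" using v(1) by (intro eq_vecI) auto
    with v(2) show False by simp
  qed
  from det_non_zero_imp_unit[OF A this, of undefined]
  obtain B where B: "B \<in> carrier_mat n n" "A * B = 1\<^sub>m n"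
    unfolding Units_def ring_mat_def by auto
  define w where "w = B *\<^sub>v vec n e"
  have w: "w \<in> carrier_vec n" using B unfolding w_def by simp
  have "A *\<^sub>v w = vec n e"
    unfolding w_def using B A by (simp add: assoc_mult_mat_vec[symmetric])
  show ?thesis
  proof (intro exI allI impI)
    fix r assume r: "r < n"
    have "(A *\<^sub>v w) $ r = e r" using \<open>A *\<^sub>v w = vec n e\<close> r by simp
    thus "(\<Sum>r'<n. (\<lambda>i. w $ i) r' * H r' r) = e r" using mv[OF r w] by simp
  qed
qed

definition SSq :: "nat \<Rightarrow> (nat \<Rightarrow> nat) \<Rightarrow> nat \<Rightarrow> pt \<Rightarrow> real" where
  "SSq k m R U = (\<Sum>i<k. \<Sum>a<m i. \<Sum>r<R. (U i a r)\<^sup>2)"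

definition Pset :: "nat \<Rightarrow> (nat \<Rightarrow> nat) \<Rightarrow> nat \<Rightarrow> (nat \<Rightarrow> nat) set" where
  "Pset k m i = PiE ({..<k} - {i}) (\<lambda>l. {..<m l})"

definition sol :: "nat \<Rightarrow> (nat \<Rightarrow> nat) \<Rightarrow> nat \<Rightarrow> real \<Rightarrow> (pt \<Rightarrow> real) \<Rightarrow> pt \<Rightarrow> pt \<Rightarrow> bool" where
  "sol k m R del F U \<xi> \<longleftrightarrow> (\<forall>i<k. \<forall>a<m i. \<forall>r<R.
     (\<Sum>r'<R. \<xi> i a r' * Hmat k m del U i r' r) = egrad F U i a r)"

lemma finite_Pset: "finite (Pset k m i)"
  unfolding Pset_def by (auto intro!: finite_PiE)

lemma quad_id:
  "(\<Sum>r<R. \<Sum>r'<R. v r * Hmat k m del U i r r' * v r') =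
   (\<Sum>j\<in>Pset k m i. (\<Sum>r<R. v r * krao k U i j r)\<^sup>2) + del * (\<Sum>r<R. (v r)\<^sup>2)"
proof -
  have 1: "(\<Sum>r<R. \<Sum>r'<R. v r * Hmat k m del U i r r' * v r') =
     (\<Sum>r<R. \<Sum>r'<R. \<Sum>j\<in>Pset k m i. (v r * krao k U i j r) * (v r' * krao k U i j r'))
     + (\<Sum>r<R. \<Sum>r'<R. v r * (if r = r' then del else 0) * v r')"
    unfolding Hmat_def Pset_def[symmetric]
    by (simp add: distrib_left distrib_right sum.distrib sum_distrib_left sum_distrib_right mult_ac)
  have 2: "(\<Sum>r<R. \<Sum>r'<R. \<Sum>j\<in>Pset k m i. (v r * krao k U i j r) * (v r' * krao k U i j r'))
     = (\<Sum>j\<in>Pset k m i. (\<Sum>r<R. v r * krao k U i j r)\<^sup>2)"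
    by (simp add: power2_eq_square sum_product sum.swap[of _ "Pset k m i"])
  have 3: "(\<Sum>r<R. \<Sum>r'<R. v r * (if r = r' then del else 0) * v r') = del * (\<Sum>r<R. (v r)\<^sup>2)"
    by (simp add: sum_distrib_left power2_eq_square mult_ac if_distrib if_distribR cong: if_cong)
  show ?thesis using 1 2 3 by simp
qed

lemma quad_nonneg_ge:
  assumes "del > 0"
  shows "del * (\<Sum>r<R. (v r)\<^sup>2) \<le> (\<Sum>r<R. \<Sum>r'<R. v r * Hmat k m del U i r r' * v r')"
  unfolding quad_id by (simp add: sum_nonneg)

lemma rmetric_quad: "rmetric k m R del U \<xi> \<xi> =
   (\<Sum>i<k. \<Sum>a<m i. \<Sum>r<R. \<Sum>r'<R. \<xi> i a r * Hmat k m del U i r r' * \<xi> i a r')"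
  unfolding rmetric_def ..

lemma rmetric_ge:
  assumes "del > 0"
  shows "del * SSq k m R \<xi> \<le> rmetric k m R del U \<xi> \<xi>"
proof -
  have "del * SSq k m R \<xi> = (\<Sum>i<k. \<Sum>a<m i. del * (\<Sum>r<R. (\<xi> i a r)\<^sup>2))"
    unfolding SSq_def by (simp add: sum_distrib_left)
  also have "\<dots> \<le> rmetric k m R del U \<xi> \<xi>"
    unfolding rmetric_quad by (rule sum_mono, rule sum_mono, rule quad_nonneg_ge[OF assms])
  finally show ?thesis .
qed

lemma rmetric_nonneg:
  assumes "del > 0"
  shows "0 \<le> rmetric k m R del U \<xi> \<xi>"
proof -
  have "0 \<le> del * SSq k m R \<xi>" using assms unfolding SSq_def by (simp add: sum_nonneg)
  thus ?thesis using rmetric_ge[OF assms, of k m R \<xi> U] by linarith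
qed

lemma rmetric_pneg: "rmetric k m R del U (pneg \<xi>) (pneg \<xi>) = rmetric k m R del U \<xi> \<xi>"
  unfolding rmetric_def pneg_def by simp

lemma rmetric_pneg1: "rmetric k m R del U (pneg \<xi>) \<xi> = - rmetric k m R del U \<xi> \<xi>"
  unfolding rmetric_def pneg_def by (simp add: sum_negf)

lemma quad_zero:
  assumes del: "del > 0" and h: "\<forall>r<R. (\<Sum>r'<R. v r' * Hmat k m del U i r' r) = 0"
  shows "\<forall>r<R. v r = 0"
proof -
  have "(\<Sum>r<R. \<Sum>r'<R. v r * Hmat k m del U i r r' * v r') =
        (\<Sum>r'<R. (\<Sum>r<R. v r * Hmat k m del U i r r') * v r')"
    by (subst sum.swap) (simp add: sum_distrib_right)
  also have "\<dots> = 0" using h by simp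
  finally have "del * (\<Sum>r<R. (v r)\<^sup>2) \<le> 0" using quad_nonneg_ge[OF del, where R=R and v=v and k=k and m=m and U=U and i=i] by simp
  hence "(\<Sum>r<R. (v r)\<^sup>2) \<le> 0" using del by (simp add: mult_le_0_iff)
  hence "(\<Sum>r<R. (v r)\<^sup>2) = 0" by (meson order_antisym sum_nonneg zero_le_power2)
  thus ?thesis by (simp add: sum_nonneg_eq_0_iff)
qed

lemma sol_unique:
  assumes del: "del > 0" and x: "\<xi> \<in> mpts k m R" "sol k m R del F U \<xi>"
    and y: "\<eta> \<in> mpts k m R" "sol k m R del F U \<eta>"
  shows "\<xi> = \<eta>"
proof (intro ext)
  fix i a r
  show "\<xi> i a r = \<eta> i a r"
  proof (cases "i < k \<and> a < m i \<and> r < R")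
    case True
    let ?v = "\<lambda>r. \<xi> i a r - \<eta> i a r"
    have "\<forall>r<R. (\<Sum>r'<R. ?v r' * Hmat k m del U i r' r) = 0"
      using x(2) y(2) True unfolding sol_def by (simp add: left_diff_distrib sum_subtractf)
    from quad_zero[OF del this] True show ?thesis by simp
  next
    case False
    thus ?thesis using x(1) y(1) unfolding mpts_def by auto
  qed
qed

lemma sol_exists:
  assumes del: "del > 0"
  shows "\<exists>\<xi>. \<xi> \<in> mpts k m R \<and> sol k m R del F U \<xi>"
proof -
  have ex: "\<exists>v. \<forall>r<R. (\<Sum>r'<R. v r' * Hmat k m del U i r' r) = egrad F U i a r" for i a
    by (rule solve_inj) (rule quad_zero[OF del], simp)
  define \<xi> where "\<xi> = (\<lambda>i a r. if i < k \<and> a < m i \<and> r < R then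
     (SOME v. \<forall>r<R. (\<Sum>r'<R. v r' * Hmat k m del U i r' r) = egrad F U i a r) r else 0)"
  have "\<xi> \<in> mpts k m R" unfolding mpts_def \<xi>_def by auto
  moreover have "sol k m R del F U \<xi>"
    unfolding sol_def
  proof (intro allI impI)
    fix i a r assume h: "i < k" "a < m i" "r < R"
    have "(\<Sum>r'<R. \<xi> i a r' * Hmat k m del U i r' r) =
      (\<Sum>r'<R. (SOME v. \<forall>r<R. (\<Sum>r'<R. v r' * Hmat k m del U i r' r) = egrad F U i a r) r' * Hmat k m del U i r' r)"
      using h unfolding \<xi>_def by (intro sum.cong) auto
    also have "\<dots> = egrad F U i a r" using someI_ex[OF ex[of i a]] h by blast
    finally show "(\<Sum>r'<R. \<xi> i a r' * Hmat k m del U i r' r) = egrad F U i a r" .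
  qed
  ultimately show ?thesis by blast
qed

lemma rgrad_char:
  assumes del: "del > 0"
  shows "rgrad k m R del F U \<in> mpts k m R \<and> sol k m R del F U (rgrad k m R del F U)"
proof -
  have "\<exists>!\<xi>. \<xi> \<in> mpts k m R \<and> sol k m R del F U \<xi>"
    using sol_exists[OF del] sol_unique[OF del] by blast
  from theI'[OF this] show ?thesis unfolding rgrad_def sol_def by simp
qed

lemma rgrad_eqI:
  assumes del: "del > 0" and "\<xi> \<in> mpts k m R" "sol k m R del F U \<xi>"
  shows "rgrad k m R del F U = \<xi>"
  using sol_unique[OF del assms(2,3)] rgrad_char[OF del] by metis

lemma sol_metric:
  assumes "sol k m R del F U \<xi>"
  shows "(\<Sum>i<k. \<Sum>a<m i. \<Sum>r<R. egrad F U i a r * \<xi> i a r) = rmetric k m R del U \<xi> \<xi>"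
proof -
  have h: "(\<Sum>r<R. egrad F U i a r * \<xi> i a r) = (\<Sum>r<R. \<Sum>r'<R. \<xi> i a r * Hmat k m del U i r r' * \<xi> i a r')"
    if "i < k" "a < m i" for i a
  proof -
    have "(\<Sum>r<R. egrad F U i a r * \<xi> i a r) = (\<Sum>r<R. (\<Sum>r'<R. \<xi> i a r' * Hmat k m del U i r' r) * \<xi> i a r)"
      using assms that unfolding sol_def by (intro sum.cong) auto
    also have "\<dots> = (\<Sum>r'<R. \<Sum>r<R. \<xi> i a r' * Hmat k m del U i r' r * \<xi> i a r)"
      unfolding sum_distrib_right by (rule sum.swap)
    finally show ?thesis .
  qed
  show ?thesis unfolding rmetric_def
    by (rule sum.cong[OF refl], rule sum.cong[OF refl], rule h) auto
qed

definition pp :: "nat \<Rightarrow> (nat \<Rightarrow> nat) \<Rightarrow> (nat \<Rightarrow> nat) set \<Rightarrow> real" where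
  "pp k m \<Omega> = real (card \<Omega>) / real (card (mindex k m))"

definition c1 :: "nat \<Rightarrow> nat \<Rightarrow> pt \<Rightarrow> pt \<Rightarrow> (nat \<Rightarrow> nat) \<Rightarrow> real" where
  "c1 k R U D j = (\<Sum>r<R. \<Sum>l<k. D l (j l) r * (\<Prod>l'\<in>{..<k}-{l}. U l' (j l') r))"

definition L1 :: "nat \<Rightarrow> (nat \<Rightarrow> nat) \<Rightarrow> nat \<Rightarrow> ((nat \<Rightarrow> nat) \<Rightarrow> real)
    \<Rightarrow> (nat \<Rightarrow> nat) set \<Rightarrow> real \<Rightarrow> pt \<Rightarrow> pt \<Rightarrow> real" where
  "L1 k m R T \<Omega> lam U D = 1 / pp k m \<Omega> * (\<Sum>j\<in>\<Omega>. (cpt k R U j - T j) * c1 k R U D j)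
     + lam * (\<Sum>i<k. \<Sum>a<m i. \<Sum>r<R. U i a r * D i a r)"

definition eg :: "nat \<Rightarrow> (nat \<Rightarrow> nat) \<Rightarrow> nat \<Rightarrow> ((nat \<Rightarrow> nat) \<Rightarrow> real)
    \<Rightarrow> (nat \<Rightarrow> nat) set \<Rightarrow> real \<Rightarrow> pt \<Rightarrow> nat \<Rightarrow> nat \<Rightarrow> nat \<Rightarrow> real" where
  "eg k m R T \<Omega> lam U i a r = 1 / pp k m \<Omega> * (\<Sum>j\<in>\<Omega>. (cpt k R U j - T j) *
      (if j i = a then (\<Prod>l\<in>{..<k}-{i}. U l (j l) r) else 0)) + lam * U i a r"

lemma pmove0[simp]: "pmove U D 0 = U"
  unfolding pmove_def by simp

lemma obj_eq: "obj k m R T \<Omega> lam U = 1 / (2 * pp k m \<Omega>) * (\<Sum>j\<in>\<Omega>. (cpt k R U j - T j)\<^sup>2)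
      + lam / 2 * (\<Sum>i<k. \<Sum>a<m i. \<Sum>r<R. (U i a r)\<^sup>2)"
  unfolding obj_def pp_def Let_def ..

lemma dprod:
  "((\<lambda>s. \<Prod>l<k. U l (j l) r + s * D l (j l) r) has_real_derivative
     (\<Sum>l<k. D l (j l) r * (\<Prod>l'\<in>{..<k}-{l}. U l' (j l') r))) (at 0)"
proof -
  have "((\<lambda>s. U l (j l) r + s * D l (j l) r) has_real_derivative D l (j l) r) (at 0)" for l
    by (auto intro!: derivative_eq_intros)
  from has_field_derivative_prod[of "{..<k}", OF this] show ?thesis by simp
qed

lemma dcpt: "((\<lambda>s. cpt k R (pmove U D s) j) has_real_derivative c1 k R U D j) (at 0)"
  unfolding cpt_def pmove_def c1_def by (rule DERIV_sum) (rule dprod)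

lemma obj_deriv:
  "((\<lambda>s. obj k m R T \<Omega> lam (pmove U D s)) has_real_derivative L1 k m R T \<Omega> lam U D) (at 0)"
proof -
  have d1: "((\<lambda>s. \<Sum>j\<in>\<Omega>. (cpt k R (pmove U D s) j - T j)\<^sup>2) has_real_derivative
      (\<Sum>j\<in>\<Omega>. 2 * ((cpt k R U j - T j) * c1 k R U D j))) (at 0)"
    by (rule DERIV_sum, rule DERIV_cong, rule DERIV_power, rule DERIV_diff[OF dcpt DERIV_const])
       (simp add: mult_ac)
  have d2: "((\<lambda>s. \<Sum>i<k. \<Sum>a<m i. \<Sum>r<R. (pmove U D s i a r)\<^sup>2) has_real_derivative
      (\<Sum>i<k. \<Sum>a<m i. \<Sum>r<R. 2 * (U i a r * D i a r))) (at 0)"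
    unfolding pmove_def
    by (rule DERIV_sum, rule DERIV_sum, rule DERIV_sum, rule DERIV_cong, rule DERIV_power,
        auto intro!: derivative_eq_intros)
  have "((\<lambda>s. obj k m R T \<Omega> lam (pmove U D s)) has_real_derivative
     1 / (2 * pp k m \<Omega>) * (\<Sum>j\<in>\<Omega>. 2 * ((cpt k R U j - T j) * c1 k R U D j))
     + lam / 2 * (\<Sum>i<k. \<Sum>a<m i. \<Sum>r<R. 2 * (U i a r * D i a r))) (at 0)"
    unfolding obj_eq by (intro DERIV_add DERIV_cmult d1 d2)
  thus ?thesis
    by (rule DERIV_cong) (simp add: L1_def sum_distrib_left[symmetric])
qed

definition Ei :: "nat \<Rightarrow> nat \<Rightarrow> nat \<Rightarrow> pt" where
  "Ei i a r = (\<lambda>i' a' r'. if i' = i \<and> a' = a \<and> r' = r then 1 else 0)"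

lemma egrad_L1: "egrad (obj k m R T \<Omega> lam) U i a r = L1 k m R T \<Omega> lam U (Ei i a r)"
proof -
  have "(\<lambda>s. obj k m R T \<Omega> lam (\<lambda>i' a' r'. U i' a' r' + (if i' = i \<and> a' = a \<and> r' = r then s else 0)))
      = (\<lambda>s. obj k m R T \<Omega> lam (pmove U (Ei i a r) s))"
    unfolding pmove_def Ei_def by (intro ext arg_cong[where f="obj k m R T \<Omega> lam"]) auto
  thus ?thesis unfolding egrad_def by (simp add: DERIV_imp_deriv[OF obj_deriv])
qed

lemma c1_Ei:
  assumes "i < k" "r < R"
  shows "c1 k R U (Ei i a r) j = (if j i = a then (\<Prod>l\<in>{..<k}-{i}. U l (j l) r) else 0)"
proof -
  define Q where "Q l r' = (\<Prod>l'\<in>{..<k}-{l}. U l' (j l') r')" for l r'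
  have s1: "(\<Sum>l<k. Ei i a r l (j l) r' * Q l r') = (if r' = r then (if j i = a then Q i r else 0) else 0)" for r'
  proof -
    have "(\<Sum>l<k. Ei i a r l (j l) r' * Q l r') =
          (\<Sum>l<k. if l = i then (if r' = r \<and> j i = a then Q i r' else 0) else 0)"
      by (rule sum.cong) (auto simp: Ei_def)
    also have "\<dots> = (if r' = r then (if j i = a then Q i r else 0) else 0)"
      using assms by simp
    finally show ?thesis .
  qed
  have "c1 k R U (Ei i a r) j = (\<Sum>r'<R. if r' = r then (if j i = a then Q i r else 0) else 0)"
    unfolding c1_def Q_def[symmetric] using s1 by simp
  also have "\<dots> = (if j i = a then (\<Prod>l\<in>{..<k}-{i}. U l (j l) r) else 0)"
    using assms unfolding Q_def by simp
  finally show ?thesis .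
qed

lemma lam_Ei:
  assumes "i < k" "a < m i" "r < R"
  shows "(\<Sum>i'<k. \<Sum>a'<m i'. \<Sum>r'<R. U i' a' r' * Ei i a r i' a' r') = U i a r"
proof -
  have s3: "(\<Sum>r'<R. U i' a' r' * Ei i a r i' a' r') = (if i' = i \<and> a' = a then U i a r else 0)" for i' a'
  proof -
    have "(\<Sum>r'<R. U i' a' r' * Ei i a r i' a' r') = (\<Sum>r'<R. if r' = r then (if i' = i \<and> a' = a then U i a r else 0) else 0)"
      by (rule sum.cong) (auto simp: Ei_def)
    thus ?thesis using assms by simp
  qed
  have s2: "(\<Sum>a'<m i'. \<Sum>r'<R. U i' a' r' * Ei i a r i' a' r') = (if i' = i then U i a r else 0)" for i'
  proof -
    have "(\<Sum>a'<m i'. \<Sum>r'<R. U i' a' r' * Ei i a r i' a' r') = (\<Sum>a'<m i'. if a' = a then (if i' = i then U i a r else 0) else 0)"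
      unfolding s3 by (rule sum.cong) auto
    thus ?thesis using assms by auto
  qed
  show ?thesis unfolding s2 using assms by simp
qed

lemma egrad_eq:
  assumes "i < k" "a < m i" "r < R"
  shows "egrad (obj k m R T \<Omega> lam) U i a r = eg k m R T \<Omega> lam U i a r"
  unfolding egrad_L1 L1_def eg_def using assms by (simp add: c1_Ei lam_Ei)

lemma mindex_lt: "j \<in> mindex k m \<Longrightarrow> l < k \<Longrightarrow> j l < m l"
  unfolding mindex_def by (auto simp: PiE_def Pi_def)

lemma eg_L1:
  assumes \<Omega>: "\<Omega> \<subseteq> mindex k m" "finite \<Omega>"
  shows "(\<Sum>i<k. \<Sum>a<m i. \<Sum>r<R. eg k m R T \<Omega> lam U i a r * D i a r) = L1 k m R T \<Omega> lam U D"
proof -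
  define cT where "cT j = cpt k R U j - T j" for j
  define P where "P i j r = (\<Prod>l\<in>{..<k}-{i}. U l (j l) r)" for i j r
  have inner: "(\<Sum>a<m i. (\<Sum>j\<in>\<Omega>. cT j * (if j i = a then P i j r else 0)) * D i a r)
      = (\<Sum>j\<in>\<Omega>. cT j * (D i (j i) r * P i j r))" if "i < k" for i r
  proof -
    have "(\<Sum>a<m i. (\<Sum>j\<in>\<Omega>. cT j * (if j i = a then P i j r else 0)) * D i a r)
       = (\<Sum>a<m i. \<Sum>j\<in>\<Omega>. (if j i = a then cT j * (D i a r * P i j r) else 0))"
      by (simp add: sum_distrib_right sum_distrib_left if_distrib if_distribR mult_ac cong: if_cong)
    also have "\<dots> = (\<Sum>j\<in>\<Omega>. \<Sum>a<m i. (if a = j i then cT j * (D i a r * P i j r) else 0))"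
      by (subst sum.swap) (intro sum.cong refl, auto)
    also have "\<dots> = (\<Sum>j\<in>\<Omega>. cT j * (D i (j i) r * P i j r))"
      using \<Omega> mindex_lt that by (intro sum.cong refl) (auto simp: sum.delta)
    finally show ?thesis .
  qed
  have A: "(\<Sum>i<k. \<Sum>a<m i. \<Sum>r<R. (\<Sum>j\<in>\<Omega>. cT j * (if j i = a then P i j r else 0)) * D i a r)
     = (\<Sum>j\<in>\<Omega>. cT j * c1 k R U D j)"
  proof -
    have "(\<Sum>i<k. \<Sum>a<m i. \<Sum>r<R. (\<Sum>j\<in>\<Omega>. cT j * (if j i = a then P i j r else 0)) * D i a r)
       = (\<Sum>i<k. \<Sum>r<R. \<Sum>a<m i. (\<Sum>j\<in>\<Omega>. cT j * (if j i = a then P i j r else 0)) * D i a r)"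
      by (rule sum.cong[OF refl], rule sum.swap)
    also have "\<dots> = (\<Sum>i<k. \<Sum>r<R. \<Sum>j\<in>\<Omega>. cT j * (D i (j i) r * P i j r))"
      using inner by simp
    also have "\<dots> = (\<Sum>j\<in>\<Omega>. \<Sum>r<R. \<Sum>i<k. cT j * (D i (j i) r * P i j r))"
      by (subst sum.swap, subst (2) sum.swap) (intro sum.cong refl, rule sum.swap)
    also have "\<dots> = (\<Sum>j\<in>\<Omega>. cT j * c1 k R U D j)"
      unfolding c1_def P_def by (simp add: sum_distrib_left)
    finally show ?thesis .
  qed
  have "(\<Sum>i<k. \<Sum>a<m i. \<Sum>r<R. eg k m R T \<Omega> lam U i a r * D i a r) =
     1 / pp k m \<Omega> * (\<Sum>i<k. \<Sum>a<m i. \<Sum>r<R. (\<Sum>j\<in>\<Omega>. cT j * (if j i = a then P i j r else 0)) * D i a r)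
     + lam * (\<Sum>i<k. \<Sum>a<m i. \<Sum>r<R. U i a r * D i a r)"
  proof -
    have pw: "eg k m R T \<Omega> lam U i a r * D i a r =
       1 / pp k m \<Omega> * ((\<Sum>j\<in>\<Omega>. cT j * (if j i = a then P i j r else 0)) * D i a r)
       + lam * (U i a r * D i a r)" for i a r
      unfolding eg_def cT_def P_def by (simp add: algebra_simps)
    show ?thesis by (simp only: pw sum.distrib sum_distrib_left[symmetric])
  qed
  also have "\<dots> = L1 k m R T \<Omega> lam U D" using A unfolding L1_def cT_def by simp
  finally show ?thesis .
qed

lemma prod_bound:
  fixes u :: "'a \<Rightarrow> real"
  assumes "\<forall>l\<in>L. \<bar>u l\<bar> \<le> B"
  shows "\<bar>\<Prod>l\<in>L. u l\<bar> \<le> B ^ card L"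
proof (cases "finite L")
  case True
  have "\<bar>\<Prod>l\<in>L. u l\<bar> = (\<Prod>l\<in>L. \<bar>u l\<bar>)" by (simp add: abs_prod)
  also have "\<dots> \<le> (\<Prod>l\<in>L. B)" using assms by (intro prod_mono) auto
  finally show ?thesis by simp
next
  case False
  have "0 \<le> B" if "L \<noteq> {}" using assms that by force
  thus ?thesis using False by simp
qed

lemma Bpow_mono: "1 \<le> (B::real) \<Longrightarrow> n \<le> N \<Longrightarrow> B ^ n \<le> B ^ N"
  by (rule power_increasing)

lemma Q_bound:
  fixes u d :: "'a \<Rightarrow> real"
  assumes L: "finite L" and u: "\<forall>l\<in>L. \<bar>u l\<bar> \<le> B" and d: "\<forall>l\<in>L. \<bar>d l\<bar> \<le> \<delta>" and B: "1 \<le> B"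
  shows "\<bar>\<Sum>l\<in>L. d l * (\<Prod>l'\<in>L-{l}. u l')\<bar> \<le> real (card L) * B ^ card L * \<delta>"
proof -
  have "\<bar>\<Sum>l\<in>L. d l * (\<Prod>l'\<in>L-{l}. u l')\<bar> \<le> (\<Sum>l\<in>L. \<bar>d l * (\<Prod>l'\<in>L-{l}. u l')\<bar>)"
    by (rule sum_abs)
  also have "\<dots> \<le> (\<Sum>l\<in>L. \<delta> * B ^ card L)"
  proof (rule sum_mono)
    fix l assume l: "l \<in> L"
    have p: "\<bar>\<Prod>l'\<in>L-{l}. u l'\<bar> \<le> B ^ card (L - {l})" using u by (intro prod_bound) auto
    have "B ^ card (L - {l}) \<le> B ^ card L" using B L by (intro Bpow_mono) (auto intro: card_mono)
    hence p2: "\<bar>\<Prod>l'\<in>L-{l}. u l'\<bar> \<le> B ^ card L" using p by linarith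
    have "\<bar>d l * (\<Prod>l'\<in>L-{l}. u l')\<bar> = \<bar>d l\<bar> * \<bar>\<Prod>l'\<in>L-{l}. u l'\<bar>" by (simp add: abs_mult)
    also have "\<dots> \<le> \<delta> * B ^ card L" using d l p2 by (intro mult_mono) auto
    finally show "\<bar>d l * (\<Prod>l'\<in>L-{l}. u l')\<bar> \<le> \<delta> * B ^ card L" .
  qed
  finally show ?thesis by (simp add: mult_ac)
qed

lemma nat_le_4pow: "real n \<le> 4 ^ n"
proof -
  have "n < 2 ^ n" by (rule less_exp)
  hence "real n \<le> 2 ^ n" by (metis less_imp_le of_nat_le_iff of_nat_numeral of_nat_power)
  also have "(2::real) ^ n \<le> 4 ^ n" by (intro power_mono) auto
  finally show ?thesis .
qed

lemma prod_exp:
  fixes u d :: "'a \<Rightarrow> real"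
  assumes L: "finite L" and u: "\<forall>l\<in>L. \<bar>u l\<bar> \<le> B" and d: "\<forall>l\<in>L. \<bar>d l\<bar> \<le> \<delta>"
    and s: "0 \<le> s" "s \<le> 1" and dl: "0 \<le> \<delta>" "\<delta> \<le> B" and B: "1 \<le> B"
  shows "\<bar>(\<Prod>l\<in>L. u l + s * d l) - (\<Prod>l\<in>L. u l) - s * (\<Sum>l\<in>L. d l * (\<Prod>l'\<in>L-{l}. u l'))\<bar>
          \<le> s\<^sup>2 * \<delta>\<^sup>2 * (4 * B) ^ card L"
  using L u d
proof (induction L rule: finite_induct)
  case empty
  show ?case by simp
next
  case (insert a L)
  define P where "P = (\<Prod>l\<in>L. u l)"
  define Q where "Q = (\<Sum>l\<in>L. d l * (\<Prod>l'\<in>L-{l}. u l'))"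
  define E where "E = (\<Prod>l\<in>L. u l + s * d l) - P - s * Q"
  define n where "n = card L"
  have IH: "\<bar>E\<bar> \<le> s\<^sup>2 * \<delta>\<^sup>2 * (4 * B) ^ n"
    using insert.IH insert.prems unfolding E_def P_def Q_def n_def by auto
  have Qb: "\<bar>Q\<bar> \<le> real n * B ^ n * \<delta>"
    unfolding Q_def n_def using insert.prems insert.hyps B by (intro Q_bound) auto
  have ua: "\<bar>u a\<bar> \<le> B" and da: "\<bar>d a\<bar> \<le> \<delta>" using insert.prems by auto
  have sum_ins: "(\<Sum>l\<in>insert a L. d l * (\<Prod>l'\<in>insert a L-{l}. u l')) = d a * P + u a * Q"
  proof -
    have "(\<Sum>l\<in>insert a L. d l * (\<Prod>l'\<in>insert a L-{l}. u l')) =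
          d a * (\<Prod>l'\<in>insert a L-{a}. u l') + (\<Sum>l\<in>L. d l * (\<Prod>l'\<in>insert a L-{l}. u l'))"
      using insert.hyps by simp
    also have "(\<Prod>l'\<in>insert a L-{a}. u l') = P" unfolding P_def using insert.hyps
      by (metis Diff_insert_absorb)
    also have "(\<Sum>l\<in>L. d l * (\<Prod>l'\<in>insert a L-{l}. u l')) = (\<Sum>l\<in>L. d l * (u a * (\<Prod>l'\<in>L-{l}. u l')))"
    proof (rule sum.cong[OF refl])
      fix l assume l: "l \<in> L"
      have "insert a L - {l} = insert a (L - {l})" using l insert.hyps by auto
      thus "d l * (\<Prod>l'\<in>insert a L-{l}. u l') = d l * (u a * (\<Prod>l'\<in>L-{l}. u l'))"
        using insert.hyps by simp
    qed
    also have "\<dots> = u a * Q" unfolding Q_def by (simp add: sum_distrib_left mult_ac)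
    finally show ?thesis .
  qed
  have eq: "(\<Prod>l\<in>insert a L. u l + s * d l) - (\<Prod>l\<in>insert a L. u l)
      - s * (\<Sum>l\<in>insert a L. d l * (\<Prod>l'\<in>insert a L-{l}. u l'))
      = u a * E + s\<^sup>2 * d a * Q + s * d a * E"
    unfolding sum_ins using insert.hyps unfolding E_def
    by (simp add: algebra_simps power2_eq_square P_def)
  define X where "X = s\<^sup>2 * \<delta>\<^sup>2 * (4 * B) ^ n"
  have X0: "0 \<le> X" unfolding X_def using B by simp
  have b1: "\<bar>u a * E\<bar> \<le> B * X" unfolding abs_mult X_def
    using ua IH B by (intro mult_mono) auto
  have sda: "\<bar>s * d a\<bar> \<le> B"
  proof -
    have "\<bar>s * d a\<bar> = s * \<bar>d a\<bar>" using s by (simp add: abs_mult)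
    also have "\<dots> \<le> 1 * \<delta>" using s da dl by (intro mult_mono) auto
    finally show ?thesis using dl by simp
  qed
  have b3: "\<bar>s * d a * E\<bar> \<le> B * X" unfolding abs_mult[of "s * d a"] X_def
    using sda IH B by (intro mult_mono) auto
  have b2: "\<bar>s\<^sup>2 * d a * Q\<bar> \<le> s\<^sup>2 * (\<delta> * (real n * B ^ n * \<delta>))"
  proof -
    have "\<bar>s\<^sup>2 * d a * Q\<bar> = s\<^sup>2 * (\<bar>d a\<bar> * \<bar>Q\<bar>)" by (simp add: abs_mult)
    also have "\<dots> \<le> s\<^sup>2 * (\<delta> * (real n * B ^ n * \<delta>))"
      using da Qb dl by (intro mult_left_mono mult_mono) auto
    finally show ?thesis .
  qed
  have nB: "real n * B ^ n \<le> 2 * B * (4 * B) ^ n"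
  proof -
    have "real n * B ^ n \<le> 4 ^ n * B ^ n" using nat_le_4pow[of n] B by (intro mult_right_mono) auto
    also have "\<dots> = (4 * B) ^ n" by (simp add: power_mult_distrib)
    also have "\<dots> \<le> 2 * B * (4 * B) ^ n" using B by simp
    finally show ?thesis .
  qed
  have b2': "s\<^sup>2 * (\<delta> * (real n * B ^ n * \<delta>)) \<le> 2 * B * X"
  proof -
    have "s\<^sup>2 * (\<delta> * (real n * B ^ n * \<delta>)) = (s\<^sup>2 * \<delta>\<^sup>2) * (real n * B ^ n)"
      by (simp add: power2_eq_square mult_ac)
    also have "\<dots> \<le> (s\<^sup>2 * \<delta>\<^sup>2) * (2 * B * (4 * B) ^ n)" using nB by (intro mult_left_mono) auto
    finally show ?thesis unfolding X_def by (simp add: mult_ac)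
  qed
  have "\<bar>u a * E + s\<^sup>2 * d a * Q + s * d a * E\<bar> \<le> 4 * B * X"
    using b1 b2 b2' b3 abs_triangle_ineq[of "u a * E + s\<^sup>2 * d a * Q" "s * d a * E"]
      abs_triangle_ineq[of "u a * E" "s\<^sup>2 * d a * Q"] by linarith
  also have "4 * B * X = s\<^sup>2 * \<delta>\<^sup>2 * (4 * B) ^ card (insert a L)"
    unfolding X_def n_def using insert.hyps by (simp add: mult_ac)
  finally show ?case unfolding eq .
qed

lemma SSq_entry:
  assumes "i < k" "a < m i" "r < R"
  shows "(D i a r)\<^sup>2 \<le> SSq k m R D"
proof -
  have "(D i a r)\<^sup>2 \<le> (\<Sum>r<R. (D i a r)\<^sup>2)" using assms by (intro member_le_sum) auto
  also have "\<dots> \<le> (\<Sum>a<m i. \<Sum>r<R. (D i a r)\<^sup>2)"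
    using assms by (intro member_le_sum[where f="\<lambda>a. \<Sum>r<R. (D i a r)\<^sup>2"]) (auto intro!: sum_nonneg)
  also have "\<dots> \<le> SSq k m R D" unfolding SSq_def
    using assms by (intro member_le_sum[where f="\<lambda>i. \<Sum>a<m i. \<Sum>r<R. (D i a r)\<^sup>2"]) (auto intro!: sum_nonneg)
  finally show ?thesis .
qed

lemma SSq_entry_abs:
  assumes "i < k" "a < m i" "r < R" "SSq k m R D \<le> \<delta>\<^sup>2" "0 \<le> \<delta>"
  shows "\<bar>D i a r\<bar> \<le> \<delta>"
proof -
  have "\<bar>D i a r\<bar>\<^sup>2 \<le> \<delta>\<^sup>2" using SSq_entry[where D=D and k=k and m=m and R=R, OF assms(1-3)] assms(4) by simp
  thus ?thesis using assms(5) by (rule power2_le_imp_le)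
qed

lemma SSq_nonneg: "0 \<le> SSq k m R D"
  unfolding SSq_def by (intro sum_nonneg) auto

lemma cpt_exp:
  assumes j: "j \<in> mindex k m"
    and U: "\<forall>i<k. \<forall>a<m i. \<forall>r<R. \<bar>U i a r\<bar> \<le> B"
    and D: "\<forall>i<k. \<forall>a<m i. \<forall>r<R. \<bar>D i a r\<bar> \<le> \<delta>"
    and s: "0 \<le> s" "s \<le> 1" and dl: "0 \<le> \<delta>" "\<delta> \<le> B" and B: "1 \<le> B"
  shows "\<bar>cpt k R (pmove U D s) j - cpt k R U j - s * c1 k R U D j\<bar> \<le> R * (s\<^sup>2 * \<delta>\<^sup>2 * (4 * B) ^ k)"
    and "\<bar>c1 k R U D j\<bar> \<le> R * (k * B ^ k * \<delta>)"
proof -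
  have u: "\<forall>l\<in>{..<k}. \<bar>U l (j l) r\<bar> \<le> B" and d: "\<forall>l\<in>{..<k}. \<bar>D l (j l) r\<bar> \<le> \<delta>" if "r < R" for r
    using U D that mindex_lt[OF j] by auto
  have eq: "cpt k R (pmove U D s) j - cpt k R U j - s * c1 k R U D j =
     (\<Sum>r<R. (\<Prod>l<k. U l (j l) r + s * D l (j l) r) - (\<Prod>l<k. U l (j l) r)
         - s * (\<Sum>l<k. D l (j l) r * (\<Prod>l'\<in>{..<k}-{l}. U l' (j l') r)))"
    unfolding cpt_def pmove_def c1_def by (simp add: sum_subtractf sum_distrib_left)
  have "\<bar>\<Sum>r<R. (\<Prod>l<k. U l (j l) r + s * D l (j l) r) - (\<Prod>l<k. U l (j l) r)
         - s * (\<Sum>l<k. D l (j l) r * (\<Prod>l'\<in>{..<k}-{l}. U l' (j l') r))\<bar>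
      \<le> (\<Sum>r<R. \<bar>(\<Prod>l<k. U l (j l) r + s * D l (j l) r) - (\<Prod>l<k. U l (j l) r)
         - s * (\<Sum>l<k. D l (j l) r * (\<Prod>l'\<in>{..<k}-{l}. U l' (j l') r))\<bar>)"
    by (rule sum_abs)
  also have "\<dots> \<le> (\<Sum>r<R. s\<^sup>2 * \<delta>\<^sup>2 * (4 * B) ^ k)"
  proof (rule sum_mono)
    fix r assume "r \<in> {..<R}" hence r: "r < R" by simp
    from prod_exp[OF finite_lessThan u[OF r] d[OF r] s dl B]
    show "\<bar>(\<Prod>l<k. U l (j l) r + s * D l (j l) r) - (\<Prod>l<k. U l (j l) r)
         - s * (\<Sum>l<k. D l (j l) r * (\<Prod>l'\<in>{..<k}-{l}. U l' (j l') r))\<bar> \<le> s\<^sup>2 * \<delta>\<^sup>2 * (4 * B) ^ k"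
      by simp
  qed
  finally show "\<bar>cpt k R (pmove U D s) j - cpt k R U j - s * c1 k R U D j\<bar> \<le> R * (s\<^sup>2 * \<delta>\<^sup>2 * (4 * B) ^ k)"
    unfolding eq by simp
  have "\<bar>c1 k R U D j\<bar> \<le> (\<Sum>r<R. \<bar>\<Sum>l<k. D l (j l) r * (\<Prod>l'\<in>{..<k}-{l}. U l' (j l') r)\<bar>)"
    unfolding c1_def by (rule sum_abs)
  also have "\<dots> \<le> (\<Sum>r<R. k * B ^ k * \<delta>)"
  proof (rule sum_mono)
    fix r assume "r \<in> {..<R}" hence r: "r < R" by simp
    from Q_bound[OF finite_lessThan u[OF r] d[OF r] B]
    show "\<bar>\<Sum>l<k. D l (j l) r * (\<Prod>l'\<in>{..<k}-{l}. U l' (j l') r)\<bar> \<le> k * B ^ k * \<delta>" by simp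
  qed
  finally show "\<bar>c1 k R U D j\<bar> \<le> R * (k * B ^ k * \<delta>)" by simp
qed

definition K1 :: "nat \<Rightarrow> nat \<Rightarrow> real \<Rightarrow> real \<Rightarrow> real" where
  "K1 k R B B2 = 2 * (R * k * B ^ k)\<^sup>2 + 2 * (R * (4 * B) ^ k)\<^sup>2 * B\<^sup>2 + 2 * B2 * (R * (4 * B) ^ k)"

lemma sq_step:
  assumes j: "j \<in> mindex k m"
    and U: "\<forall>i<k. \<forall>a<m i. \<forall>r<R. \<bar>U i a r\<bar> \<le> B"
    and D: "\<forall>i<k. \<forall>a<m i. \<forall>r<R. \<bar>D i a r\<bar> \<le> \<delta>"
    and s: "0 \<le> s" "s \<le> 1" and dl: "0 \<le> \<delta>" "\<delta> \<le> B" and B: "1 \<le> B"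
    and c0: "\<bar>cpt k R U j - t\<bar> \<le> B2"
  shows "(cpt k R (pmove U D s) j - t)\<^sup>2 \<le> (cpt k R U j - t)\<^sup>2 + 2 * s * ((cpt k R U j - t) * c1 k R U D j)
           + K1 k R B B2 * (s\<^sup>2 * \<delta>\<^sup>2)"
proof -
  define c0 where "c0 = cpt k R U j - t"
  define cv where "cv = c1 k R U D j"
  define e where "e = cpt k R (pmove U D s) j - cpt k R U j - s * cv"
  define Y where "Y = s\<^sup>2 * \<delta>\<^sup>2"
  have eb: "\<bar>e\<bar> \<le> R * (4 * B) ^ k * Y" using cpt_exp(1)[OF assms(1-8)] unfolding e_def cv_def Y_def
    by (simp add: mult_ac)
  have cb: "\<bar>cv\<bar> \<le> R * k * B ^ k * \<delta>" using cpt_exp(2)[OF assms(1-8)] unfolding cv_def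
    by (simp add: mult_ac)
  have Y0: "0 \<le> Y" unfolding Y_def by simp
  have sd: "s * \<delta> \<le> B" using s dl by (metis mult_left_le_one_le order_trans)
  have YB: "Y \<le> B\<^sup>2" unfolding Y_def
    using power_mono[OF sd, of 2] s dl by (simp add: power_mult_distrib)
  have id: "(cpt k R (pmove U D s) j - t)\<^sup>2 = c0\<^sup>2 + 2 * s * (c0 * cv) + ((s * cv + e)\<^sup>2 + 2 * c0 * e)"
    unfolding c0_def e_def by (simp add: power2_eq_square algebra_simps)
  have t1: "(s * cv + e)\<^sup>2 \<le> 2 * (s * cv)\<^sup>2 + 2 * e\<^sup>2"
  proof -
    have "0 \<le> (s * cv - e)\<^sup>2" by simp
    thus ?thesis by (simp add: power2_eq_square algebra_simps)
  qed
  have t2: "(s * cv)\<^sup>2 \<le> (R * k * B ^ k)\<^sup>2 * Y"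
  proof -
    have "\<bar>s * cv\<bar> \<le> s * (R * k * B ^ k * \<delta>)" using cb s by (simp add: abs_mult mult_left_mono)
    from power_mono[OF this abs_ge_zero, of 2] show ?thesis unfolding Y_def
      by (simp add: power_mult_distrib mult_ac)
  qed
  have t3: "e\<^sup>2 \<le> (R * (4 * B) ^ k)\<^sup>2 * B\<^sup>2 * Y"
  proof -
    from power_mono[OF eb abs_ge_zero, of 2]
    have "e\<^sup>2 \<le> (R * (4 * B) ^ k)\<^sup>2 * (Y * Y)" by (simp add: power_mult_distrib power2_eq_square mult_ac)
    also have "\<dots> \<le> (R * (4 * B) ^ k)\<^sup>2 * (B\<^sup>2 * Y)"
      using YB Y0 by (intro mult_left_mono mult_right_mono) auto
    finally show ?thesis by (simp add: mult_ac)
  qed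
  have t4: "2 * c0 * e \<le> 2 * B2 * (R * (4 * B) ^ k) * Y"
  proof -
    have "c0 * e \<le> \<bar>c0\<bar> * \<bar>e\<bar>" by (metis abs_ge_self abs_mult)
    also have "\<dots> \<le> B2 * (R * (4 * B) ^ k * Y)"
      using c0 eb unfolding c0_def by (intro mult_mono) auto
    finally show ?thesis by (simp add: mult_ac)
  qed
  have "(s * cv + e)\<^sup>2 + 2 * c0 * e \<le> K1 k R B B2 * Y"
    unfolding K1_def using t1 t2 t3 t4 by (simp add: algebra_simps)
  thus ?thesis unfolding id c0_def[symmetric] cv_def[symmetric] Y_def[symmetric] by simp
qed

lemma finite_mindex: "finite (mindex k m)"
  unfolding mindex_def by (intro finite_PiE) auto

lemma pp_pos: assumes "\<Omega> \<subseteq> mindex k m" "\<Omega> \<noteq> {}" shows "0 < pp k m \<Omega>"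
proof -
  have f: "finite \<Omega>" using assms finite_mindex finite_subset by blast
  have "card \<Omega> > 0" using f assms by (simp add: card_gt_0_iff)
  moreover have "card (mindex k m) > 0" using assms finite_mindex by (auto simp: card_gt_0_iff)
  ultimately show ?thesis unfolding pp_def by simp
qed

definition Mc :: "nat \<Rightarrow> (nat \<Rightarrow> nat) \<Rightarrow> nat \<Rightarrow> (nat \<Rightarrow> nat) set \<Rightarrow> real \<Rightarrow> real \<Rightarrow> real \<Rightarrow> real" where
  "Mc k m R \<Omega> lam B B2 = real (card \<Omega>) * K1 k R B B2 / (2 * pp k m \<Omega>) + lam / 2"

lemma obj_exp:
  assumes \<Omega>: "\<Omega> \<subseteq> mindex k m" "\<Omega> \<noteq> {}" and lam: "0 \<le> lam"
    and U: "\<forall>i<k. \<forall>a<m i. \<forall>r<R. \<bar>U i a r\<bar> \<le> B"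
    and D: "\<forall>i<k. \<forall>a<m i. \<forall>r<R. \<bar>D i a r\<bar> \<le> \<delta>" and SD: "SSq k m R D \<le> \<delta>\<^sup>2"
    and s: "0 \<le> s" "s \<le> 1" and dl: "0 \<le> \<delta>" "\<delta> \<le> B" and B: "1 \<le> B"
    and c0: "\<forall>j\<in>\<Omega>. \<bar>cpt k R U j - T j\<bar> \<le> B2"
  shows "obj k m R T \<Omega> lam (pmove U D s) \<le> obj k m R T \<Omega> lam U + s * L1 k m R T \<Omega> lam U D
           + s\<^sup>2 * \<delta>\<^sup>2 * Mc k m R \<Omega> lam B B2"
proof -
  define Y where "Y = s\<^sup>2 * \<delta>\<^sup>2"
  define p where "p = pp k m \<Omega>"
  have p: "0 < p" unfolding p_def by (rule pp_pos[OF \<Omega>])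
  have S1: "(\<Sum>j\<in>\<Omega>. (cpt k R (pmove U D s) j - T j)\<^sup>2) \<le>
     (\<Sum>j\<in>\<Omega>. (cpt k R U j - T j)\<^sup>2) + 2 * s * (\<Sum>j\<in>\<Omega>. (cpt k R U j - T j) * c1 k R U D j)
     + real (card \<Omega>) * K1 k R B B2 * Y"
  proof -
    have "(\<Sum>j\<in>\<Omega>. (cpt k R (pmove U D s) j - T j)\<^sup>2) \<le>
      (\<Sum>j\<in>\<Omega>. (cpt k R U j - T j)\<^sup>2 + 2 * s * ((cpt k R U j - T j) * c1 k R U D j) + K1 k R B B2 * Y)"
    proof (rule sum_mono)
      fix j assume j: "j \<in> \<Omega>"
      show "(cpt k R (pmove U D s) j - T j)\<^sup>2 \<le> (cpt k R U j - T j)\<^sup>2 + 2 * s * ((cpt k R U j - T j) * c1 k R U D j) + K1 k R B B2 * Y"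
        unfolding Y_def using sq_step[OF _ U D s dl B, of j "T j" B2] j \<Omega>(1) c0 by auto
    qed
    also have "\<dots> = (\<Sum>j\<in>\<Omega>. (cpt k R U j - T j)\<^sup>2) + 2 * s * (\<Sum>j\<in>\<Omega>. (cpt k R U j - T j) * c1 k R U D j)
     + real (card \<Omega>) * K1 k R B B2 * Y"
      by (simp add: sum.distrib sum_distrib_left)
    finally show ?thesis .
  qed
  have S2: "(\<Sum>i<k. \<Sum>a<m i. \<Sum>r<R. (pmove U D s i a r)\<^sup>2) =
     (\<Sum>i<k. \<Sum>a<m i. \<Sum>r<R. (U i a r)\<^sup>2) + 2 * s * (\<Sum>i<k. \<Sum>a<m i. \<Sum>r<R. U i a r * D i a r)
     + s\<^sup>2 * SSq k m R D"
  proof -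
    have pw: "(pmove U D s i a r)\<^sup>2 = (U i a r)\<^sup>2 + 2 * s * (U i a r * D i a r) + s\<^sup>2 * (D i a r)\<^sup>2" for i a r
      unfolding pmove_def by (simp add: power2_eq_square algebra_simps)
    show ?thesis unfolding SSq_def by (simp only: pw sum.distrib sum_distrib_left[symmetric])
  qed
  have "obj k m R T \<Omega> lam (pmove U D s) = 1 / (2 * p) * (\<Sum>j\<in>\<Omega>. (cpt k R (pmove U D s) j - T j)\<^sup>2)
      + lam / 2 * (\<Sum>i<k. \<Sum>a<m i. \<Sum>r<R. (pmove U D s i a r)\<^sup>2)"
    unfolding obj_eq p_def ..
  also have "\<dots> \<le> 1 / (2 * p) * ((\<Sum>j\<in>\<Omega>. (cpt k R U j - T j)\<^sup>2) + 2 * s * (\<Sum>j\<in>\<Omega>. (cpt k R U j - T j) * c1 k R U D j)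
     + real (card \<Omega>) * K1 k R B B2 * Y)
     + lam / 2 * ((\<Sum>i<k. \<Sum>a<m i. \<Sum>r<R. (U i a r)\<^sup>2) + 2 * s * (\<Sum>i<k. \<Sum>a<m i. \<Sum>r<R. U i a r * D i a r)
     + Y)"
  proof (rule add_mono)
    show "1 / (2 * p) * (\<Sum>j\<in>\<Omega>. (cpt k R (pmove U D s) j - T j)\<^sup>2) \<le> 1 / (2 * p) * ((\<Sum>j\<in>\<Omega>. (cpt k R U j - T j)\<^sup>2) + 2 * s * (\<Sum>j\<in>\<Omega>. (cpt k R U j - T j) * c1 k R U D j)
     + real (card \<Omega>) * K1 k R B B2 * Y)" using S1 p by (intro mult_left_mono) auto
    have "s\<^sup>2 * SSq k m R D \<le> Y" unfolding Y_def using SD by (intro mult_left_mono) auto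
    thus "lam / 2 * (\<Sum>i<k. \<Sum>a<m i. \<Sum>r<R. (pmove U D s i a r)\<^sup>2) \<le> lam / 2 * ((\<Sum>i<k. \<Sum>a<m i. \<Sum>r<R. (U i a r)\<^sup>2) + 2 * s * (\<Sum>i<k. \<Sum>a<m i. \<Sum>r<R. U i a r * D i a r)
     + Y)" unfolding S2 using lam by (intro mult_left_mono) auto
  qed
  also have "\<dots> = obj k m R T \<Omega> lam U + s * L1 k m R T \<Omega> lam U D + Y * Mc k m R \<Omega> lam B B2"
    unfolding obj_eq L1_def Mc_def p_def[symmetric] using p by (simp add: field_simps)
  finally show ?thesis unfolding Y_def by (simp add: mult_ac)
qed

context
  fixes k R :: nat and m :: "nat \<Rightarrow> nat"
    and T :: "(nat \<Rightarrow> nat) \<Rightarrow> real" and \<Omega> :: "(nat \<Rightarrow> nat) set"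
    and lam del :: real
  assumes \<Omega>: "\<Omega> \<subseteq> mindex k m" "\<Omega> \<noteq> {}" and lam: "lam > 0" and del: "del > 0"
begin

abbreviation "Fo \<equiv> obj k m R T \<Omega> lam"
abbreviation "gr U \<equiv> rgrad k m R del Fo U"
abbreviation "pq \<equiv> pp k m \<Omega>"

lemma finOm: "finite \<Omega>" using \<Omega> finite_mindex finite_subset by blast

lemma p_pos: "0 < pq" by (rule pp_pos[OF \<Omega>])

lemma SSq_eq: "SSq k m R U = (\<Sum>i<k. \<Sum>a<m i. \<Sum>r<R. (U i a r)\<^sup>2)" unfolding SSq_def ..

lemma obj_nonneg: "0 \<le> Fo U"
  unfolding obj_eq using p_pos lam by (intro add_nonneg_nonneg mult_nonneg_nonneg sum_nonneg) auto

lemma obj_ge_SSq: "lam / 2 * SSq k m R U \<le> Fo U"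
  unfolding obj_eq SSq_def using p_pos by (simp add: sum_nonneg)

lemma obj_ge_c: assumes "j \<in> \<Omega>" shows "1 / (2 * pq) * (cpt k R U j - T j)\<^sup>2 \<le> Fo U"
proof -
  have "(cpt k R U j - T j)\<^sup>2 \<le> (\<Sum>j\<in>\<Omega>. (cpt k R U j - T j)\<^sup>2)"
    using assms finOm by (intro member_le_sum) auto
  hence "1 / (2 * pq) * (cpt k R U j - T j)\<^sup>2 \<le> 1 / (2 * pq) * (\<Sum>j\<in>\<Omega>. (cpt k R U j - T j)\<^sup>2)"
    using p_pos by (intro mult_left_mono) auto
  moreover have "0 \<le> lam / 2 * (\<Sum>i<k. \<Sum>a<m i. \<Sum>r<R. (U i a r)\<^sup>2)" using lam by (simp add: sum_nonneg)
  ultimately show ?thesis unfolding obj_eq by linarith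
qed

lemma U_bound:
  assumes "Fo U \<le> Bz" "i < k" "a < m i" "r < R"
  shows "\<bar>U i a r\<bar> \<le> sqrt (2 * Bz / lam)"
proof -
  have "(U i a r)\<^sup>2 \<le> SSq k m R U" by (rule SSq_entry[where D=U and k=k and m=m and R=R, OF assms(2-4)])
  also have "\<dots> \<le> 2 * Bz / lam" using obj_ge_SSq[of U] assms(1) lam by (simp add: field_simps)
  finally show ?thesis by (simp add: real_le_rsqrt)
qed

lemma c_bound:
  assumes "Fo U \<le> Bz" "j \<in> \<Omega>"
  shows "\<bar>cpt k R U j - T j\<bar> \<le> sqrt (2 * pq * Bz)"
proof -
  have a: "(cpt k R U j - T j)\<^sup>2 \<le> 2 * pq * Fo U" using obj_ge_c[OF assms(2), of U] p_pos
    by (simp add: field_simps)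
  have "2 * pq * Fo U \<le> 2 * pq * Bz" using assms(1) p_pos by (intro mult_left_mono) auto
  hence "(cpt k R U j - T j)\<^sup>2 \<le> 2 * pq * Bz" using a by linarith
  thus ?thesis by (simp add: real_le_rsqrt)
qed

lemma eg_bound:
  assumes "\<forall>i<k. \<forall>a<m i. \<forall>r<R. \<bar>U i a r\<bar> \<le> Bu" "1 \<le> Bu" "\<forall>j\<in>\<Omega>. \<bar>cpt k R U j - T j\<bar> \<le> B2"
    and "i < k" "a < m i" "r < R"
  shows "\<bar>eg k m R T \<Omega> lam U i a r\<bar> \<le> real (card \<Omega>) * B2 * Bu ^ k / pq + lam * Bu"
proof -
  have t: "\<bar>(cpt k R U j - T j) * (if j i = a then (\<Prod>l\<in>{..<k}-{i}. U l (j l) r) else 0)\<bar> \<le> B2 * Bu ^ k"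
    if j: "j \<in> \<Omega>" for j
  proof -
    have pb: "\<bar>\<Prod>l\<in>{..<k}-{i}. U l (j l) r\<bar> \<le> Bu ^ card ({..<k}-{i})"
      using assms(1,6) mindex_lt[of j k m] j \<Omega>(1) by (intro prod_bound) auto
    have "Bu ^ card ({..<k}-{i}) \<le> Bu ^ k" using assms(2) by (intro power_increasing) (auto intro: card_mono[of "{..<k}", simplified])
    hence pb2: "\<bar>if j i = a then (\<Prod>l\<in>{..<k}-{i}. U l (j l) r) else 0\<bar> \<le> Bu ^ k"
      using pb assms(2) by auto
    have "\<bar>cpt k R U j - T j\<bar> \<le> B2" using assms(3) j by auto
    thus ?thesis unfolding abs_mult using pb2 by (intro mult_mono) auto
  qed
  have "\<bar>\<Sum>j\<in>\<Omega>. (cpt k R U j - T j) * (if j i = a then (\<Prod>l\<in>{..<k}-{i}. U l (j l) r) else 0)\<bar>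
     \<le> (\<Sum>j\<in>\<Omega>. B2 * Bu ^ k)"
    by (rule order_trans[OF sum_abs sum_mono]) (rule t)
  hence s1: "\<bar>\<Sum>j\<in>\<Omega>. (cpt k R U j - T j) * (if j i = a then (\<Prod>l\<in>{..<k}-{i}. U l (j l) r) else 0)\<bar>
     \<le> real (card \<Omega>) * B2 * Bu ^ k" by simp
  have "\<bar>eg k m R T \<Omega> lam U i a r\<bar> \<le> 1 / pq * \<bar>\<Sum>j\<in>\<Omega>. (cpt k R U j - T j) * (if j i = a then (\<Prod>l\<in>{..<k}-{i}. U l (j l) r) else 0)\<bar>
       + lam * \<bar>U i a r\<bar>"
  proof -
    have "\<bar>eg k m R T \<Omega> lam U i a r\<bar> \<le> \<bar>1 / pq * (\<Sum>j\<in>\<Omega>. (cpt k R U j - T j) * (if j i = a then (\<Prod>l\<in>{..<k}-{i}. U l (j l) r) else 0))\<bar>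
       + \<bar>lam * U i a r\<bar>" unfolding eg_def by (rule abs_triangle_ineq)
    thus ?thesis using p_pos lam by (simp add: abs_mult)
  qed
  also have "\<dots> \<le> 1 / pq * (real (card \<Omega>) * B2 * Bu ^ k) + lam * Bu"
    using s1 assms(1,4,5,6) p_pos lam by (intro add_mono mult_left_mono) auto
  finally show ?thesis by simp
qed

lemma SSq_bound:
  assumes "\<forall>i<k. \<forall>a<m i. \<forall>r<R. \<bar>V i a r\<bar> \<le> b"
  shows "SSq k m R V \<le> (\<Sum>i<k. real (m i) * R) * b\<^sup>2"
proof -
  have "SSq k m R V \<le> (\<Sum>i<k. \<Sum>a<m i. \<Sum>r<R. b\<^sup>2)"
    unfolding SSq_def
  proof (rule sum_mono, rule sum_mono, rule sum_mono)
    fix i a r assume "i \<in> {..<k}" "a \<in> {..<m i}" "r \<in> {..<R}"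
    hence "\<bar>V i a r\<bar> \<le> b" using assms by auto
    hence "\<bar>V i a r\<bar>\<^sup>2 \<le> \<bar>b\<bar>\<^sup>2" by (intro power_mono) auto
    thus "(V i a r)\<^sup>2 \<le> b\<^sup>2" by simp
  qed
  also have "\<dots> = (\<Sum>i<k. real (m i) * R) * b\<^sup>2" by (simp add: sum_distrib_right mult.assoc)
  finally show ?thesis .
qed

lemma metric_eg: "rmetric k m R del U (gr U) (gr U) = (\<Sum>i<k. \<Sum>a<m i. \<Sum>r<R. eg k m R T \<Omega> lam U i a r * gr U i a r)"
proof -
  have "rmetric k m R del U (gr U) (gr U) = (\<Sum>i<k. \<Sum>a<m i. \<Sum>r<R. egrad Fo U i a r * gr U i a r)"
    by (rule sol_metric[symmetric], rule conjunct2[OF rgrad_char[OF del]])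
  also have "\<dots> = (\<Sum>i<k. \<Sum>a<m i. \<Sum>r<R. eg k m R T \<Omega> lam U i a r * gr U i a r)"
    by (intro sum.cong refl) (simp add: egrad_eq)
  finally show ?thesis .
qed

lemma g_SSq:
  "SSq k m R (gr U) \<le> SSq k m R (eg k m R T \<Omega> lam U) / del\<^sup>2"
proof -
  let ?e = "eg k m R T \<Omega> lam U"
  have pw: "?e i a r * gr U i a r \<le> (?e i a r)\<^sup>2 / (2 * del) + del / 2 * (gr U i a r)\<^sup>2" for i a r
  proof -
    have "0 \<le> (?e i a r - del * gr U i a r)\<^sup>2 / (2 * del)" using del by simp
    thus ?thesis using del by (simp add: power2_eq_square field_simps)
  qed
  have "del * SSq k m R (gr U) \<le> rmetric k m R del U (gr U) (gr U)" by (rule rmetric_ge[OF del])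
  also have "\<dots> \<le> (\<Sum>i<k. \<Sum>a<m i. \<Sum>r<R. (?e i a r)\<^sup>2 / (2 * del) + del / 2 * (gr U i a r)\<^sup>2)"
    unfolding metric_eg by (intro sum_mono pw)
  also have "\<dots> = SSq k m R ?e / (2 * del) + del / 2 * SSq k m R (gr U)"
    unfolding SSq_def by (simp add: sum.distrib sum_distrib_left sum_divide_distrib)
  finally have "del / 2 * SSq k m R (gr U) \<le> SSq k m R ?e / (2 * del)" by simp
  thus ?thesis using del by (simp add: field_simps power2_eq_square)
qed

lemma L1_g: "L1 k m R T \<Omega> lam U (pneg (gr U)) = - rmetric k m R del U (gr U) (gr U)"
  unfolding eg_L1[OF \<Omega>(1) finOm, symmetric] metric_eg pneg_def
  by (simp add: sum_negf)

lemma SSq_pneg: "SSq k m R (pneg V) = SSq k m R V"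
  unfolding SSq_def pneg_def by simp

lemma suff_decrease:
  "\<exists>sh>0. \<exists>c>0. \<forall>U. Fo U \<le> Bz \<longrightarrow>
     Fo (pmove U (pneg (gr U)) sh) \<le> Fo U - c * rmetric k m R del U (gr U) (gr U)"
proof -
  define Bu where "Bu = max 1 (sqrt (2 * Bz / lam))"
  define B2 where "B2 = sqrt (2 * pq * Bz)"
  define B3 where "B3 = real (card \<Omega>) * B2 * Bu ^ k / pq + lam * Bu"
  define NN where "NN = (\<Sum>i<k. real (m i) * R)"
  define B5 where "B5 = sqrt (NN * B3\<^sup>2 / del\<^sup>2)"
  define B where "B = max Bu B5"
  define M where "M = max 1 (Mc k m R \<Omega> lam B B2)"
  define sh where "sh = min 1 (del / (2 * M))"
  have M1: "1 \<le> M" unfolding M_def by simp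
  have sh0: "0 < sh" unfolding sh_def using del M1 by simp
  have sh1: "sh \<le> 1" unfolding sh_def by simp
  have shM: "sh * M / del \<le> 1 / 2"
  proof -
    have "sh \<le> del / (2 * M)" unfolding sh_def by simp
    hence "sh * M \<le> del / 2" using M1 by (simp add: field_simps)
    thus ?thesis using del by (simp add: field_simps)
  qed
  have Bu1: "1 \<le> Bu" unfolding Bu_def by simp
  have B1: "1 \<le> B" unfolding B_def using Bu1 by simp
  show ?thesis
  proof (intro exI conjI allI impI)
    show "0 < sh" by (fact sh0)
    show "0 < sh / 2" using sh0 by simp
    fix U assume FU: "Fo U \<le> Bz"
    define mm where "mm = rmetric k m R del U (gr U) (gr U)"
    define \<delta> where "\<delta> = sqrt (SSq k m R (gr U))"
    have Ub: "\<forall>i<k. \<forall>a<m i. \<forall>r<R. \<bar>U i a r\<bar> \<le> Bu"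
      using U_bound[OF FU] unfolding Bu_def by (meson max.cobounded2 order_trans)
    have UB: "\<forall>i<k. \<forall>a<m i. \<forall>r<R. \<bar>U i a r\<bar> \<le> B"
      using Ub unfolding B_def by (meson max.cobounded1 order_trans)
    have cb: "\<forall>j\<in>\<Omega>. \<bar>cpt k R U j - T j\<bar> \<le> B2" using c_bound[OF FU] unfolding B2_def by auto
    have egb: "\<forall>i<k. \<forall>a<m i. \<forall>r<R. \<bar>eg k m R T \<Omega> lam U i a r\<bar> \<le> B3"
      using eg_bound[OF Ub Bu1 cb] unfolding B3_def by auto
    have "SSq k m R (gr U) \<le> NN * B3\<^sup>2 / del\<^sup>2"
      using order_trans[OF g_SSq[of U] divide_right_mono[OF SSq_bound[OF egb]]] unfolding NN_def by simp
    hence dB5: "\<delta> \<le> B5" unfolding \<delta>_def B5_def by (simp add: real_sqrt_le_mono)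
    have dB: "\<delta> \<le> B" using dB5 unfolding B_def by simp
    have d0: "0 \<le> \<delta>" unfolding \<delta>_def using SSq_nonneg by simp
    have SD: "SSq k m R (pneg (gr U)) \<le> \<delta>\<^sup>2" unfolding SSq_pneg \<delta>_def using SSq_nonneg by simp
    have Db: "\<forall>i<k. \<forall>a<m i. \<forall>r<R. \<bar>pneg (gr U) i a r\<bar> \<le> \<delta>"
      using SSq_entry_abs[OF _ _ _ SD d0] by blast
    have exp: "Fo (pmove U (pneg (gr U)) sh) \<le> Fo U + sh * L1 k m R T \<Omega> lam U (pneg (gr U))
           + sh\<^sup>2 * \<delta>\<^sup>2 * Mc k m R \<Omega> lam B B2"
      using obj_exp[OF \<Omega> less_imp_le[OF lam] UB Db SD less_imp_le[OF sh0] sh1 d0 dB B1 cb] .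
    have d2: "\<delta>\<^sup>2 \<le> mm / del"
    proof -
      have "\<delta>\<^sup>2 = SSq k m R (gr U)" unfolding \<delta>_def using SSq_nonneg by simp
      also have "\<dots> \<le> mm / del" using rmetric_ge[OF del, of k m R "gr U" U] del unfolding mm_def
        by (simp add: field_simps)
      finally show ?thesis .
    qed
    have "sh\<^sup>2 * \<delta>\<^sup>2 * Mc k m R \<Omega> lam B B2 \<le> sh\<^sup>2 * \<delta>\<^sup>2 * M"
      unfolding M_def by (intro mult_left_mono) auto
    also have "\<dots> \<le> sh\<^sup>2 * (mm / del) * M" using d2 M1 by (intro mult_right_mono mult_left_mono) auto
    also have "\<dots> = sh * (sh * M / del) * mm" by (simp add: power2_eq_square)
    also have "\<dots> \<le> sh * (1 / 2) * mm"
      using shM sh0 rmetric_nonneg[OF del] unfolding mm_def by (intro mult_right_mono mult_left_mono) auto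
    finally have q: "sh\<^sup>2 * \<delta>\<^sup>2 * Mc k m R \<Omega> lam B B2 \<le> sh / 2 * mm" by simp
    show "Fo (pmove U (pneg (gr U)) sh) \<le> Fo U - sh / 2 * rmetric k m R del U (gr U) (gr U)"
      using exp q unfolding L1_g mm_def[symmetric] by simp
  qed
qed

end

lemma coord_cpt:
  assumes X: "\<forall>i<k. \<forall>a<m i. \<forall>r<R. (\<lambda>n. X n i a r) \<longlonglongrightarrow> Y i a r" and j: "j \<in> mindex k m"
  shows "(\<lambda>n. cpt k R (X n) j) \<longlonglongrightarrow> cpt k R Y j"
  unfolding cpt_def using X mindex_lt[OF j] by (intro tendsto_sum tendsto_prod) auto

lemma coord_eg:
  assumes X: "\<forall>i<k. \<forall>a<m i. \<forall>r<R. (\<lambda>n. X n i a r) \<longlonglongrightarrow> Y i a r" and \<Omega>: "\<Omega> \<subseteq> mindex k m"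
    and i: "i < k" "a < m i" "r < R"
  shows "(\<lambda>n. eg k m R T \<Omega> lam (X n) i a r) \<longlonglongrightarrow> eg k m R T \<Omega> lam Y i a r"
proof -
  have c: "(\<lambda>n. cpt k R (X n) j) \<longlonglongrightarrow> cpt k R Y j" if "j \<in> \<Omega>" for j
    using coord_cpt[OF X] that \<Omega> by auto
  have p: "(\<lambda>n. \<Prod>l\<in>{..<k}-{i}. X n l (j l) r) \<longlonglongrightarrow> (\<Prod>l\<in>{..<k}-{i}. Y l (j l) r)" if "j \<in> \<Omega>" for j
    using X mindex_lt[of j k m] that \<Omega> i by (intro tendsto_prod) auto
  have q: "(\<lambda>n. (cpt k R (X n) j - T j) * (if j i = a then \<Prod>l\<in>{..<k}-{i}. X n l (j l) r else 0))
     \<longlonglongrightarrow> (cpt k R Y j - T j) * (if j i = a then \<Prod>l\<in>{..<k}-{i}. Y l (j l) r else 0)" if "j \<in> \<Omega>" for j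
    using c[OF that] p[OF that] by (cases "j i = a") (auto intro!: tendsto_mult tendsto_diff)
  show ?thesis unfolding eg_def using X i
    by (intro tendsto_add tendsto_mult tendsto_const tendsto_sum q) auto
qed

lemma coord_H:
  assumes X: "\<forall>i<k. \<forall>a<m i. \<forall>r<R. (\<lambda>n. X n i a r) \<longlonglongrightarrow> Y i a r"
    and i: "i < k" "r < R" "r' < R"
  shows "(\<lambda>n. Hmat k m del (X n) i r r') \<longlonglongrightarrow> Hmat k m del Y i r r'"
  unfolding Hmat_def krao_def using X i
  by (intro tendsto_add tendsto_mult tendsto_const tendsto_sum tendsto_prod) (auto simp: PiE_def Pi_def)

lemma pmove_mpts: "U \<in> mpts k m R \<Longrightarrow> D \<in> mpts k m R \<Longrightarrow> pmove U (pneg D) s \<in> mpts k m R"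
  unfolding mpts_def pmove_def pneg_def by auto

theorem proposition4p3:
  fixes k R :: nat and m :: "nat \<Rightarrow> nat"
    and T :: "(nat \<Rightarrow> nat) \<Rightarrow> real" and \<Omega> :: "(nat \<Rightarrow> nat) set"
    and lam del :: real and x :: "nat \<Rightarrow> pt" and s :: "nat \<Rightarrow> real"
  assumes k: "2 \<le> k" and R: "1 \<le> R" and m: "\<forall>i<k. 1 \<le> m i"
    and \<Omega>: "\<Omega> \<subseteq> mindex k m" "\<Omega> \<noteq> {}"
    and lam: "lam > 0" and del: "del > 0"
    and iter: "rgd_iter k m R del (obj k m R T \<Omega> lam) x s"
    and rule: "linemin_rule k m R del (obj k m R T \<Omega> lam) x s \<or>
       (\<exists>\<sigma> \<beta> smin. 0 < \<sigma> \<and> \<sigma> < 1 \<and> 0 < \<beta> \<and> \<beta> < 1 \<and> 0 < smin \<and>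
          armijo_rule k m R del (obj k m R T \<Omega> lam) \<sigma> \<beta> smin x s)"
  shows "(\<forall>y. accum_pt k m R x y \<longrightarrow>
            rgrad k m R del (obj k m R T \<Omega> lam) y = (\<lambda>i a r. 0))
    \<and> (\<exists>C>0. \<forall>\<epsilon>>0. \<exists>t::nat.
          int t \<le> \<lceil>(obj k m R T \<Omega> lam (x 0) - (INF U\<in>mpts k m R. obj k m R T \<Omega> lam U))
                    / (C * \<epsilon>\<^sup>2)\<rceil> \<and>
          rnorm k m R del (x t) (rgrad k m R del (obj k m R T \<Omega> lam) (x t)) \<le> \<epsilon>)"
proof -
  let ?F = "obj k m R T \<Omega> lam"
  let ?g = "\<lambda>U. rgrad k m R del ?F U"
  define mt where "mt t = rmetric k m R del (x t) (?g (x t)) (?g (x t))" for t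
  have mt0: "0 \<le> mt t" for t unfolding mt_def by (rule rmetric_nonneg[OF del])
  have xs: "x (Suc t) = pmove (x t) (pneg (?g (x t))) (s t)" for t
    using iter unfolding rgd_iter_def by auto
  have xm: "x t \<in> mpts k m R" for t
  proof (induction t)
    case 0 thus ?case using iter unfolding rgd_iter_def by auto
  next
    case (Suc t) thus ?case unfolding xs using pmove_mpts rgrad_char[OF del] by blast
  qed
  define finf where "finf = (INF U\<in>mpts k m R. ?F U)"
  have bdd: "bdd_below (?F ` mpts k m R)"
    using obj_nonneg[OF \<Omega> lam del] by (intro bdd_belowI[where m=0]) auto
  have finf: "finf \<le> ?F (x t)" for t
    unfolding finf_def by (rule cINF_lower[OF bdd xm])
  have desc: "\<exists>c>0. \<forall>t. c * mt t \<le> ?F (x t) - ?F (x (Suc t))"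
    using rule
  proof
    assume lm: "linemin_rule k m R del ?F x s"
    obtain sh c where sh: "sh > 0" "c > 0" and sd: "\<forall>U. ?F U \<le> ?F (x 0) \<longrightarrow>
        ?F (pmove U (pneg (?g U)) sh) \<le> ?F U - c * rmetric k m R del U (?g U) (?g U)"
      using suff_decrease[OF \<Omega> lam del, where Bz="?F (x 0)"] by blast
    have step: "?F (x (Suc t)) \<le> ?F (pmove (x t) (pneg (?g (x t))) sh)" for t
      using lm sh(1) unfolding linemin_rule_def xs by auto
    have bnd: "?F (x t) \<le> ?F (x 0)" for t
    proof (induction t)
      case (Suc t)
      have "?F (x (Suc t)) \<le> ?F (x t) - c * mt t" using step[of t] sd Suc unfolding mt_def by force
      moreover have "0 \<le> c * mt t" using sh(2) mt0[of t] by simp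
      ultimately show ?case using Suc by linarith
    qed simp
    show ?thesis
    proof (intro exI conjI allI)
      show "0 < c" by (fact sh(2))
      fix t
      have "?F (x (Suc t)) \<le> ?F (x t) - c * mt t" using step[of t] sd bnd[of t] unfolding mt_def by force
      thus "c * mt t \<le> ?F (x t) - ?F (x (Suc t))" by linarith
    qed
  next
    assume "\<exists>\<sigma> \<beta> smin. 0 < \<sigma> \<and> \<sigma> < 1 \<and> 0 < \<beta> \<and> \<beta> < 1 \<and> 0 < smin \<and>
          armijo_rule k m R del ?F \<sigma> \<beta> smin x s"
    then obtain \<sigma> \<beta> smin where p: "0 < \<sigma>" "0 < smin" and ar: "armijo_rule k m R del ?F \<sigma> \<beta> smin x s"
      by blast
    show ?thesis
    proof (intro exI conjI allI)
      show "0 < \<sigma> * smin" using p by simp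
      fix t
      let ?P = "\<lambda>l::nat. armijo_cond k m R del ?F \<sigma> (x t) (max (armijo_trial k m R del ?F x t * \<beta> ^ l) smin)"
      have ex: "\<exists>l. ?P l" and st: "s t = max (armijo_trial k m R del ?F x t * \<beta> ^ (LEAST l. ?P l)) smin"
        using ar unfolding armijo_rule_def by auto
      have "armijo_cond k m R del ?F \<sigma> (x t) (s t)" unfolding st by (rule LeastI_ex[OF ex])
      hence cnd: "\<sigma> * s t * mt t \<le> ?F (x t) - ?F (x (Suc t))"
        unfolding armijo_cond_def rmetric_pneg mt_def xs by simp
      have "smin \<le> s t" unfolding st by simp
      hence "\<sigma> * smin * mt t \<le> \<sigma> * s t * mt t" using p mt0[of t] by (intro mult_right_mono mult_left_mono) auto
      thus "\<sigma> * smin * mt t \<le> ?F (x t) - ?F (x (Suc t))" using cnd by linarith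
    qed
  qed
  then obtain c where c: "c > 0" "\<And>t. c * mt t \<le> ?F (x t) - ?F (x (Suc t))" by blast
  have tele: "(\<Sum>t<N. c * mt t) \<le> ?F (x 0) - ?F (x N)" for N
  proof (induction N)
    case (Suc N) thus ?case using c(2)[of N] by simp
  qed simp
  have D0: "0 \<le> ?F (x 0) - finf" using finf[of 0] by simp
  have part2: "\<exists>C>0. \<forall>\<epsilon>>0. \<exists>t::nat.
          int t \<le> \<lceil>(?F (x 0) - (INF U\<in>mpts k m R. ?F U)) / (C * \<epsilon>\<^sup>2)\<rceil> \<and>
          rnorm k m R del (x t) (?g (x t)) \<le> \<epsilon>"
  proof (intro exI[of _ c] conjI allI impI)
    show "0 < c" by (fact c(1))
    fix \<epsilon> :: real assume e: "\<epsilon> > 0"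
    have ce: "0 < c * \<epsilon>\<^sup>2" using c(1) e by simp
    define N where "N = nat \<lceil>(?F (x 0) - finf) / (c * \<epsilon>\<^sup>2)\<rceil>"
    have Nge: "(?F (x 0) - finf) / (c * \<epsilon>\<^sup>2) \<le> real N" unfolding N_def by (rule real_nat_ceiling_ge)
    hence NceD: "?F (x 0) - finf \<le> real N * (c * \<epsilon>\<^sup>2)" using ce by (simp add: field_simps)
    have "\<exists>t\<le>N. sqrt (mt t) \<le> \<epsilon>"
    proof (rule ccontr)
      assume neg: "\<not> (\<exists>t\<le>N. sqrt (mt t) \<le> \<epsilon>)"
      hence gt: "\<epsilon>\<^sup>2 < mt t" if "t \<le> N" for t
      proof -
        have "\<epsilon> < sqrt (mt t)" using neg that by auto
        hence "\<epsilon>\<^sup>2 < (sqrt (mt t))\<^sup>2" using e by (intro power_strict_mono) auto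
        thus ?thesis using mt0[of t] by simp
      qed
      have "(\<Sum>t<Suc N. c * \<epsilon>\<^sup>2) < (\<Sum>t<Suc N. c * mt t)"
        using gt c(1) by (intro sum_strict_mono) auto
      also have "\<dots> \<le> ?F (x 0) - ?F (x (Suc N))" by (rule tele)
      also have "\<dots> \<le> ?F (x 0) - finf" using finf[of "Suc N"] by simp
      finally have "(real N + 1) * (c * \<epsilon>\<^sup>2) < ?F (x 0) - finf" by (simp add: algebra_simps)
      thus False using NceD ce by (simp add: algebra_simps)
    qed
    then obtain t where t: "t \<le> N" "sqrt (mt t) \<le> \<epsilon>" by blast
    have "0 \<le> (?F (x 0) - finf) / (c * \<epsilon>\<^sup>2)" using D0 ce by simp
    hence "int N = \<lceil>(?F (x 0) - finf) / (c * \<epsilon>\<^sup>2)\<rceil>" unfolding N_def by simp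
    hence "int t \<le> \<lceil>(?F (x 0) - finf) / (c * \<epsilon>\<^sup>2)\<rceil>" using t(1) by linarith
    moreover have "rnorm k m R del (x t) (?g (x t)) \<le> \<epsilon>" unfolding rnorm_def using t(2) unfolding mt_def .
    ultimately show "\<exists>t::nat. int t \<le> \<lceil>(?F (x 0) - (INF U\<in>mpts k m R. ?F U)) / (c * \<epsilon>\<^sup>2)\<rceil> \<and>
          rnorm k m R del (x t) (?g (x t)) \<le> \<epsilon>" unfolding finf_def by blast
  qed
  have summ: "summable mt"
  proof (rule summableI_nonneg_bounded[where x="(?F (x 0) - finf) / c"])
    show "0 \<le> mt n" for n by (rule mt0)
    fix n
    have "c * (\<Sum>t<n. mt t) \<le> ?F (x 0) - finf"
      using tele[of n] finf[of n] by (simp add: sum_distrib_left)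
    thus "sum mt {..<n} \<le> (?F (x 0) - finf) / c" using c(1) by (simp add: field_simps)
  qed
  have mt_lim: "mt \<longlonglongrightarrow> 0" by (rule summable_LIMSEQ_zero[OF summ])
  have part1: "\<forall>y. accum_pt k m R x y \<longrightarrow> ?g y = (\<lambda>i a r. 0)"
  proof (intro allI impI)
    fix y assume "accum_pt k m R x y"
    then obtain \<phi> where y: "y \<in> mpts k m R" "strict_mono \<phi>"
      "(\<lambda>n. fnorm k m R (\<lambda>i a r. x (\<phi> n) i a r - y i a r)) \<longlonglongrightarrow> 0"
      unfolding accum_pt_def by blast
    define X where "X n = x (\<phi> n)" for n
    have coord: "\<forall>i<k. \<forall>a<m i. \<forall>r<R. (\<lambda>n. X n i a r) \<longlonglongrightarrow> y i a r"
    proof (intro allI impI)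
      fix i a r assume h: "i < k" "a < m i" "r < R"
      have le: "norm (X n i a r - y i a r) \<le> fnorm k m R (\<lambda>i a r. x (\<phi> n) i a r - y i a r)" for n
      proof -
        have "(X n i a r - y i a r)\<^sup>2 \<le> SSq k m R (\<lambda>i a r. x (\<phi> n) i a r - y i a r)"
          using SSq_entry[where D="\<lambda>i a r. x (\<phi> n) i a r - y i a r" and k=k and m=m and R=R, OF h]
          unfolding X_def by simp
        hence "sqrt ((X n i a r - y i a r)\<^sup>2) \<le> sqrt (SSq k m R (\<lambda>i a r. x (\<phi> n) i a r - y i a r))"
          by (rule real_sqrt_le_mono)
        thus ?thesis unfolding fnorm_def SSq_def by simp
      qed
      have "(\<lambda>n. X n i a r - y i a r) \<longlonglongrightarrow> 0"
        by (rule Lim_null_comparison[OF always_eventually y(3)]) (use le in auto)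
      from tendsto_add[OF this tendsto_const[of "y i a r"]]
      show "(\<lambda>n. X n i a r) \<longlonglongrightarrow> y i a r" by simp
    qed
    have mtX: "(\<lambda>n. mt (\<phi> n)) \<longlonglongrightarrow> 0" using LIMSEQ_subseq_LIMSEQ[OF mt_lim y(2)] by (simp add: o_def)
    have gX: "(\<lambda>n. ?g (X n) i a r) \<longlonglongrightarrow> 0" if h: "i < k" "a < m i" "r < R" for i a r
    proof -
      have le: "norm (?g (X n) i a r) \<le> sqrt (mt (\<phi> n) / del)" for n
      proof -
        have "(?g (X n) i a r)\<^sup>2 \<le> SSq k m R (?g (X n))"
          by (rule SSq_entry[where D="?g (X n)" and k=k and m=m and R=R, OF h])
        also have "\<dots> \<le> mt (\<phi> n) / del"
          using rmetric_ge[OF del, of k m R "?g (X n)" "X n"] del unfolding mt_def X_def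
          by (simp add: field_simps)
        finally have "sqrt ((?g (X n) i a r)\<^sup>2) \<le> sqrt (mt (\<phi> n) / del)" by (rule real_sqrt_le_mono)
        thus ?thesis by simp
      qed
      have "(\<lambda>n. sqrt (mt (\<phi> n) / del)) \<longlonglongrightarrow> sqrt (0 / del)"
        by (intro tendsto_real_sqrt tendsto_divide mtX tendsto_const) (use del in auto)
      hence lim: "(\<lambda>n. sqrt (mt (\<phi> n) / del)) \<longlonglongrightarrow> 0" by simp
      show ?thesis by (rule Lim_null_comparison[OF always_eventually lim]) (use le in auto)
    qed
    have egy: "eg k m R T \<Omega> lam y i a r = 0" if h: "i < k" "a < m i" "r < R" for i a r
    proof -
      have eq: "eg k m R T \<Omega> lam (X n) i a r = (\<Sum>r'<R. ?g (X n) i a r' * Hmat k m del (X n) i r' r)" for n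
        using conjunct2[OF rgrad_char[OF del, of k m R ?F "X n"]] h egrad_eq[where k=k and m=m and R=R and T=T and \<Omega>=\<Omega> and lam=lam and U="X n", OF h]
        unfolding sol_def by auto
      have "(\<lambda>n. \<Sum>r'<R. ?g (X n) i a r' * Hmat k m del (X n) i r' r) \<longlonglongrightarrow> (\<Sum>r'<R. 0 * Hmat k m del y i r' r)"
        using h by (intro tendsto_sum tendsto_mult gX coord_H[OF coord]) auto
      hence "(\<lambda>n. eg k m R T \<Omega> lam (X n) i a r) \<longlonglongrightarrow> 0" unfolding eq by simp
      from LIMSEQ_unique[OF coord_eg[OF coord \<Omega>(1) h] this] show ?thesis .
    qed
    show "?g y = (\<lambda>i a r. 0)"
      by (rule rgrad_eqI[OF del]) (auto simp: mpts_def sol_def egrad_eq egy)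
  qed
  show ?thesis using part1 part2 by blast
qed

end
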